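(* In the setting described in the context, for every $i\in\{1,\dots,N\}$ there exists a constant $\bar v\in\mathbb{R}^d$ such that $\lim_{t\to T_0^-}v_j(t)=\bar v$ for all $j\in[i]$.
   Context: Setting: $N,d\ge 1$, $\alpha\in(0,1)$, $\psi(s)=s^{-\alpha}$ ($s>0$), $\psi(0)=0$; $\psi_n(s)=\psi(s)$ for $s\ge(n-1)^{-1/\alpha}$, $\psi_n(s)=n$ for $s\le n^{-1/\alpha}$, smooth and monotone in between. Fix $T>0$ and initial data $x(0),v(0)\in\mathbb{R}^{Nd}$; let $x^n$ be the $C^2$ solution on $[0,T]$ of $\dot x^n_i=v^n_i$, $\dot v^n_i=\frac1N\sum_k(v^n_k-v^n_i)\psi_n(|x^n_i-x^n_k|)$ with these data. Pass to a subsequence (not relabeled) with $x^n\to x$ uniformly on $[0,T]$. Let $B_i(0)=\{k: x_k(0)\ne x_i(0)\text{ or }v_k(0)\ne v_i(0)\}$ and $T_0:=\inf\{t>0:\min_{i,\ j\in B_i(0)}\lim_{n}|x^n_i(t)-x^n_j(t)|=0\}$; assume $T_0\le T$. Assume moreover (after a further subsequence) that $x^n\to x$ in $C^1([0,t])$ for every $t<T_0$, and set $v=\dot x$ on $[0,T_0)$. Define $i\,\dot\sim\, j$ iff $j\notin B_i(0)$ or $\int_t^{T_0}\psi(|x_i(s)-x_j(s)|)ds=\infty$ for all $t<T_0$; let $\sim$ be the equivalence relation generated by $\dot\sim$ (its transitive closure), and $[i]$ the equivalence class of $i$. *)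

theory Defs
  imports "HOL-Analysis.Analysis"
begin

definition psi :: "real \<Rightarrow> real \<Rightarrow> real" where
  "psi \<alpha> s = (if s > 0 then s powr (- \<alpha>) else 0)"

definition smooth_on :: "real set \<Rightarrow> (real \<Rightarrow> real) \<Rightarrow> bool" where
  "smooth_on S f \<longleftrightarrow> (\<forall>k. ((deriv ^^ k) f) differentiable_on S)"

definition cutoff_family :: "real \<Rightarrow> (nat \<Rightarrow> real \<Rightarrow> real) \<Rightarrow> bool" where
  "cutoff_family \<alpha> psin \<longleftrightarrow>
     (\<forall>n\<ge>1. smooth_on {0<..} (psin n)
        \<and> (\<forall>s. 0 \<le> s \<and> s \<le> real n powr (-1/\<alpha>) \<longrightarrow> psin n s = real n)
        \<and> (n \<ge> 2 \<longrightarrow> (\<forall>s. s \<ge> real (n-1) powr (-1/\<alpha>) \<longrightarrow> psin n s = psi \<alpha> s))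
        \<and> (n \<ge> 2 \<longrightarrow> monotone_on {real n powr (-1/\<alpha>) .. real (n-1) powr (-1/\<alpha>)}
                           (\<le>) (\<ge>) (psin n)))"

definition Bset :: "nat \<Rightarrow> (nat \<Rightarrow> 'a) \<Rightarrow> (nat \<Rightarrow> 'a) \<Rightarrow> nat \<Rightarrow> nat set" where
  "Bset N x0 v0 i = {k. k < N \<and> (x0 k \<noteq> x0 i \<or> v0 k \<noteq> v0 i)}"

definition dotsim :: "nat \<Rightarrow> real \<Rightarrow> (nat \<Rightarrow> 'd::real_normed_vector) \<Rightarrow> (nat \<Rightarrow> 'd)
    \<Rightarrow> (nat \<Rightarrow> real \<Rightarrow> 'd) \<Rightarrow> real \<Rightarrow> (nat \<times> nat) set" where
  "dotsim N \<alpha> x0 v0 x T0 = {(i, j). i < N \<and> j < N \<and>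
      (j \<notin> Bset N x0 v0 i \<or>
       (\<forall>t\<in>{0..<T0}. (\<integral>\<^sup>+ s\<in>{t..T0}. ennreal (psi \<alpha> (norm (x i s - x j s))) \<partial>lborel) = \<infinity>))}"

definition eqclass :: "nat \<Rightarrow> real \<Rightarrow> (nat \<Rightarrow> 'd::real_normed_vector) \<Rightarrow> (nat \<Rightarrow> 'd)
    \<Rightarrow> (nat \<Rightarrow> real \<Rightarrow> 'd) \<Rightarrow> real \<Rightarrow> nat \<Rightarrow> nat set" where
  "eqclass N \<alpha> x0 v0 x T0 i =
     {j. j < N \<and> (i, j) \<in> (dotsim N \<alpha> x0 v0 x T0 \<union> (dotsim N \<alpha> x0 v0 x T0)\<inverse>)\<^sup>*}"

end

theory Submission
  imports Defs
begin


locale setting =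
  fixes N :: nat and \<alpha> T T0 :: real
    and psin :: "nat \<Rightarrow> real \<Rightarrow> real"
    and x0 v0 :: "nat \<Rightarrow> real ^ 'd"
    and xs vs :: "nat \<Rightarrow> nat \<Rightarrow> real \<Rightarrow> real ^ 'd"
    and \<phi> :: "nat \<Rightarrow> nat"
    and x v :: "nat \<Rightarrow> real \<Rightarrow> real ^ 'd"
  assumes N: "N \<ge> 1"
    and alpha: "0 < \<alpha>" "\<alpha> < 1"
    and cutoff: "cutoff_family \<alpha> psin"
    and T: "T > 0"
    and init: "\<And>n i. n \<ge> 1 \<Longrightarrow> i < N \<Longrightarrow> xs n i 0 = x0 i \<and> vs n i 0 = v0 i"
    and ode_x: "\<And>n i t. n \<ge> 1 \<Longrightarrow> i < N \<Longrightarrow> t \<in> {0..T} \<Longrightarrow>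
                  (xs n i has_vector_derivative vs n i t) (at t within {0..T})"
    and ode_v: "\<And>n i t. n \<ge> 1 \<Longrightarrow> i < N \<Longrightarrow> t \<in> {0..T} \<Longrightarrow>
                  (vs n i has_vector_derivative
                     ((1 / real N) *\<^sub>R (\<Sum>k<N. psin n (norm (xs n i t - xs n k t)) *\<^sub>R (vs n k t - vs n i t))))
                  (at t within {0..T})"
    and subseq: "strict_mono \<phi>" "\<And>k. \<phi> k \<ge> 1"
    and unif: "\<And>i. i < N \<Longrightarrow> uniform_limit {0..T} (\<lambda>k. xs (\<phi> k) i) (x i) sequentially"
    and T0: "T0 = Inf {t \<in> {0<..T}. \<exists>i<N. \<exists>j\<in>Bset N x0 v0 i.
                          lim (\<lambda>k. norm (xs (\<phi> k) i t - xs (\<phi> k) j t)) = 0}"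
    and T0_ne: "{t \<in> {0<..T}. \<exists>i<N. \<exists>j\<in>Bset N x0 v0 i.
                          lim (\<lambda>k. norm (xs (\<phi> k) i t - xs (\<phi> k) j t)) = 0} \<noteq> {}"
    and C1: "\<And>i t. i < N \<Longrightarrow> 0 \<le> t \<Longrightarrow> t < T0 \<Longrightarrow>
               uniform_limit {0..t} (\<lambda>k. vs (\<phi> k) i) (v i) sequentially"
    and vdef: "\<And>i t. i < N \<Longrightarrow> t \<in> {0..<T0} \<Longrightarrow>
               (x i has_vector_derivative v i t) (at t within {0..<T0})"
begin

lemma psi_nonneg: "psi \<alpha> s \<ge> 0"
  by (simp add: psi_def)

lemma psin_eq_psi: "n \<ge> 2 \<Longrightarrow> s \<ge> real (n-1) powr (-1/\<alpha>) \<Longrightarrow> psin n s = psi \<alpha> s"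
  using cutoff unfolding cutoff_family_def by auto

lemma psin_const: "n \<ge> 1 \<Longrightarrow> 0 \<le> s \<Longrightarrow> s \<le> real n powr (-1/\<alpha>) \<Longrightarrow> psin n s = real n"
  using cutoff unfolding cutoff_family_def by auto

lemma psin_nonneg:
  assumes n: "n \<ge> 2" and s: "s \<ge> 0"
  shows "psin n s \<ge> 0"
proof -
  have cf: "monotone_on {real n powr (-1/\<alpha>) .. real (n-1) powr (-1/\<alpha>)} (\<le>) (\<ge>) (psin n)"
    using cutoff n unfolding cutoff_family_def by auto
  consider "s \<le> real n powr (-1/\<alpha>)" | "s \<ge> real (n-1) powr (-1/\<alpha>)"
    | "real n powr (-1/\<alpha>) \<le> s" "s \<le> real (n-1) powr (-1/\<alpha>)" by linarith
  then show ?thesis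
  proof cases
    case 1 then show ?thesis using psin_const[of n s] n s by auto
  next
    case 2 then show ?thesis using psin_eq_psi[of n s] n psi_nonneg by auto
  next
    case 3
    then have "psin n s \<ge> psin n (real (n-1) powr (-1/\<alpha>))"
      using cf by (auto simp: monotone_on_def)
    also have "psin n (real (n-1) powr (-1/\<alpha>)) = psi \<alpha> (real (n-1) powr (-1/\<alpha>))"
      using psin_eq_psi[of n] n by auto
    finally show ?thesis using psi_nonneg[of "real (n-1) powr (-1/\<alpha>)"] by linarith
  qed
qed

lemma phi_ge: "\<phi> k \<ge> k"
  using subseq(1) by (simp add: strict_mono_imp_increasing)

lemma ev_phi_ge: "eventually (\<lambda>k. \<phi> k \<ge> m) sequentially"
  by (rule eventually_mono[OF eventually_ge_at_top[of m]]) (use phi_ge le_trans in blast)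

lemma xs_cont: "n \<ge> 1 \<Longrightarrow> i < N \<Longrightarrow> continuous_on {0..T} (xs n i)"
  using ode_x by (meson continuous_on_eq_continuous_within has_vector_derivative_continuous)

lemma vs_cont: "n \<ge> 1 \<Longrightarrow> i < N \<Longrightarrow> continuous_on {0..T} (vs n i)"
  using ode_v by (meson continuous_on_eq_continuous_within has_vector_derivative_continuous)

lemma x_cont: "i < N \<Longrightarrow> continuous_on {0..T} (x i)"
  by (rule uniform_limit_theorem[OF _ unif]) (auto intro!: always_eventually xs_cont subseq)

lemma x_lim: "i < N \<Longrightarrow> t \<in> {0..T} \<Longrightarrow> (\<lambda>k. xs (\<phi> k) i t) \<longlonglongrightarrow> x i t"
  using tendsto_uniform_limitI[OF unif] by auto

lemma S_bdd: "bdd_below {t \<in> {0<..T}. \<exists>i<N. \<exists>j\<in>Bset N x0 v0 i.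
                          lim (\<lambda>k. norm (xs (\<phi> k) i t - xs (\<phi> k) j t)) = 0}"
  by (rule bdd_belowI[of _ 0]) auto

lemma T0_ge: "T0 \<ge> 0"
  unfolding T0 by (rule cInf_greatest[OF T0_ne]) auto

lemma T0_le: "T0 \<le> T"
proof -
  obtain t where "t \<in> {t \<in> {0<..T}. \<exists>i<N. \<exists>j\<in>Bset N x0 v0 i.
                          lim (\<lambda>k. norm (xs (\<phi> k) i t - xs (\<phi> k) j t)) = 0}" using T0_ne by blast
  then have "T0 \<le> t" unfolding T0 by (rule cInf_lower[OF _ S_bdd])
  then show ?thesis using \<open>t \<in> _\<close> by auto
qed

lemma Bset_lt: "j \<in> Bset N x0 v0 i \<Longrightarrow> j < N"
  by (simp add: Bset_def)

lemma sep:
  assumes i: "i < N" and j: "j \<in> Bset N x0 v0 i" and r: "0 < r" "r < T0"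
  shows "x i r \<noteq> x j r"
proof
  assume eq: "x i r = x j r"
  have jN: "j < N" using j Bset_lt by auto
  have rT: "r \<in> {0..T}" using r T0_le by auto
  have "(\<lambda>k. norm (xs (\<phi> k) i r - xs (\<phi> k) j r)) \<longlonglongrightarrow> norm (x i r - x j r)"
    by (intro tendsto_intros x_lim i jN rT)
  then have "lim (\<lambda>k. norm (xs (\<phi> k) i r - xs (\<phi> k) j r)) = 0"
    using eq by (simp add: limI)
  then have "r \<in> {t \<in> {0<..T}. \<exists>i<N. \<exists>j\<in>Bset N x0 v0 i.
                          lim (\<lambda>k. norm (xs (\<phi> k) i t - xs (\<phi> k) j t)) = 0}"
    using i j r T0_le by auto
  then have "T0 \<le> r" unfolding T0 using cInf_lower[OF _ S_bdd] by blast
  then show False using r by simp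
qed

lemma v_lim: "i < N \<Longrightarrow> 0 \<le> t \<Longrightarrow> t < T0 \<Longrightarrow> (\<lambda>k. vs (\<phi> k) i t) \<longlonglongrightarrow> v i t"
  using tendsto_uniform_limitI[OF C1] by auto

lemma v_cont: "i < N \<Longrightarrow> t < T0 \<Longrightarrow> continuous_on {0..t} (v i)"
proof (cases "0 \<le> t")
  case True
  assume i: "i < N" and t: "t < T0"
  have sub: "{0..t} \<subseteq> {0..T}" using t T0_le by auto
  show ?thesis
  proof (rule uniform_limit_theorem[OF _ C1[OF i True t]])
    show "\<forall>\<^sub>F n in sequentially. continuous_on {0..t} (vs (\<phi> n) i)"
      using continuous_on_subset[OF vs_cont sub] subseq i by (simp add: always_eventually)
  qed simp
next
  case False then show ?thesis by simp
qed

end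



lemma mono_prod_nonneg:
  fixes h :: "real \<Rightarrow> real"
  assumes "mono h"
  shows "(h u - h w) * (u - w) \<ge> 0"
proof (cases "u \<le> w")
  case True then have "h u \<le> h w" using assms by (simp add: monoD)
  then show ?thesis using True by (simp add: mult_nonpos_nonpos)
next
  case False then have "h w \<le> h u" using assms by (simp add: monoD)
  then show ?thesis using False by simp
qed

lemma cons_alg:
  fixes N :: nat and a :: "nat \<Rightarrow> nat \<Rightarrow> real" and y :: "nat \<Rightarrow> real" and h :: "real \<Rightarrow> real"
  assumes sym: "\<And>p q. p < N \<Longrightarrow> q < N \<Longrightarrow> a p q = a q p"
    and nonneg: "\<And>p q. p < N \<Longrightarrow> q < N \<Longrightarrow> 0 \<le> a p q"
    and mono: "mono h" and ij: "i < N" "j < N"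
  shows "(\<Sum>p<N. h (y p) * ((1 / real N) * (\<Sum>k<N. a p k * (y k - y p))))
          \<le> - (1 / (2 * real N)) * (a i j * ((h (y i) - h (y j)) * (y i - y j)))"
proof -
  define S where "S = (\<Sum>p<N. \<Sum>k<N. a p k * h (y p) * (y k - y p))"
  define Tm where "Tm p k = a p k * ((h (y p) - h (y k)) * (y p - y k))" for p k
  have L: "(\<Sum>p<N. h (y p) * ((1 / real N) * (\<Sum>k<N. a p k * (y k - y p)))) = S / real N"
    unfolding S_def sum_divide_distrib
    by (intro sum.cong refl) (simp add: sum_distrib_left sum_divide_distrib algebra_simps diff_divide_distrib)
  have S2: "S = (\<Sum>p<N. \<Sum>k<N. a p k * h (y k) * (y p - y k))"
  proof -
    have "S = (\<Sum>k<N. \<Sum>p<N. a p k * h (y p) * (y k - y p))"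
      unfolding S_def by (rule sum.swap)
    also have "\<dots> = (\<Sum>k<N. \<Sum>p<N. a k p * h (y p) * (y k - y p))"
      by (intro sum.cong refl) (simp add: sym)
    finally show ?thesis by simp
  qed
  have "2 * S = (\<Sum>p<N. \<Sum>k<N. a p k * h (y p) * (y k - y p) + a p k * h (y k) * (y p - y k))"
    using S2 unfolding S_def by (simp add: sum.distrib)
  also have "\<dots> = - (\<Sum>p<N. \<Sum>k<N. Tm p k)"
    unfolding Tm_def by (simp add: sum_negf[symmetric] algebra_simps)
  finally have S2': "2 * S = - (\<Sum>p<N. \<Sum>k<N. Tm p k)" .
  have Tnn: "\<And>p k. p < N \<Longrightarrow> k < N \<Longrightarrow> Tm p k \<ge> 0"
    unfolding Tm_def using nonneg mono_prod_nonneg[OF mono] by (simp add: mult_nonneg_nonneg)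
  have "(\<Sum>p<N. \<Sum>k<N. Tm p k) = (\<Sum>pk\<in>{..<N} \<times> {..<N}. Tm (fst pk) (snd pk))"
    by (simp add: sum.cartesian_product case_prod_beta)
  also have "\<dots> \<ge> (\<Sum>pk\<in>{(i,j)}. Tm (fst pk) (snd pk))"
    by (rule sum_mono2) (use ij Tnn in auto)
  finally have "(\<Sum>p<N. \<Sum>k<N. Tm p k) \<ge> Tm i j"
    using ij by simp
  then have "S \<le> - Tm i j / 2" using S2' by linarith
  moreover have "real N > 0" using ij by simp
  ultimately show ?thesis unfolding L Tm_def
    by (simp add: divide_simps)
qed




lemma vd_nth:
  assumes "(f has_vector_derivative f') F"
  shows "((\<lambda>t. f t $ l) has_real_derivative f' $ l) F"
proof -
  have "((\<lambda>t. f t $ l) has_derivative (\<lambda>h. (h *\<^sub>R f') $ l)) F"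
    using bounded_linear.has_derivative[OF bounded_linear_vec_nth[of l] assms[unfolded has_vector_derivative_def]] .
  then show ?thesis
    by (simp add: has_real_derivative_iff_has_vector_derivative has_vector_derivative_def)
qed

context setting begin

lemma y_deriv:
  assumes n: "n \<ge> 1" and p: "p < N" and t: "t \<in> {0..T}"
  shows "((\<lambda>t. vs n p t $ l) has_real_derivative
     (1 / real N) * (\<Sum>k<N. psin n (norm (xs n p t - xs n k t)) * (vs n k t $ l - vs n p t $ l)))
     (at t within {0..T})"
  using vd_nth[OF ode_v[OF n p t], of l] by (simp add: sum_component)

lemma Psi_deriv:
  assumes n: "n \<ge> 2" and t: "t \<in> {0..T}" and g: "\<And>u. (g has_real_derivative h u) (at u)"
    and mh: "mono h" and ij: "i < N" "j < N"
  shows "\<exists>D. ((\<lambda>t. \<Sum>p<N. g (vs n p t $ l)) has_real_derivative D) (at t within {0..T}) \<and>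
     D \<le> - (1 / (2 * real N)) * (psin n (norm (xs n i t - xs n j t)) *
          ((h (vs n i t $ l) - h (vs n j t $ l)) * (vs n i t $ l - vs n j t $ l)))"
proof -
  define a where "a p k = psin n (norm (xs n p t - xs n k t))" for p k
  define y where "y p = vs n p t $ l" for p
  have n1: "n \<ge> 1" using n by simp
  have d: "((\<lambda>t. \<Sum>p<N. g (vs n p t $ l)) has_real_derivative
      (\<Sum>p<N. h (y p) * ((1 / real N) * (\<Sum>k<N. a p k * (y k - y p))))) (at t within {0..T})"
    unfolding a_def y_def
    by (rule DERIV_sum, rule DERIV_chain2[OF g y_deriv[OF n1 _ t]]) auto
  have "(\<Sum>p<N. h (y p) * ((1 / real N) * (\<Sum>k<N. a p k * (y k - y p))))
        \<le> - (1 / (2 * real N)) * (a i j * ((h (y i) - h (y j)) * (y i - y j)))"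
    by (rule cons_alg[OF _ _ mh ij]) (auto simp: a_def norm_minus_commute intro!: psin_nonneg n)
  with d show ?thesis unfolding a_def y_def by blast
qed

lemma Psi_mono:
  assumes n: "n \<ge> 2" and g: "\<And>u. (g has_real_derivative h u) (at u)"
    and mh: "mono h" and st: "0 \<le> s" "s \<le> t" "t \<le> T"
  shows "(\<Sum>p<N. g (vs n p t $ l)) \<le> (\<Sum>p<N. g (vs n p s $ l))"
proof -
  have N0: "0 < N" using N by simp
  have der: "\<exists>D. ((\<lambda>t. \<Sum>p<N. g (vs n p t $ l)) has_real_derivative D) (at r within {0..T}) \<and> D \<le> 0"
    if r: "r \<in> {0..T}" for r
    using Psi_deriv[OF n r g mh N0 N0, of l] by simp
  have cont: "continuous_on {0..T} (\<lambda>t. \<Sum>p<N. g (vs n p t $ l))"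
    unfolding continuous_on_eq_continuous_within using der DERIV_continuous by blast
  show ?thesis
  proof (rule DERIV_nonpos_imp_decreasing_open[OF st(2)])
    fix r assume r: "s < r" "r < t"
    then have "r \<in> interior {0..T}" using st by auto
    then show "\<exists>y. ((\<lambda>t. \<Sum>p<N. g (vs n p t $ l)) has_real_derivative y) (at r) \<and> y \<le> 0"
      using der[of r] r st at_within_interior by fastforce
  next
    show "continuous_on {s..t} (\<lambda>t. \<Sum>p<N. g (vs n p t $ l))"
      by (rule continuous_on_subset[OF cont]) (use st in auto)
  qed
qed

lemma Psi_mono_lim:
  assumes g: "\<And>u. (g has_real_derivative h u) (at u)"
    and mh: "mono h" and st: "0 \<le> s" "s \<le> t" "t < T0"
  shows "(\<Sum>p<N. g (v p t $ l)) \<le> (\<Sum>p<N. g (v p s $ l))"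
proof -
  have gc: "isCont g u" for u using g DERIV_isCont by blast
  have lim: "(\<lambda>k. \<Sum>p<N. g (vs (\<phi> k) p r $ l)) \<longlonglongrightarrow> (\<Sum>p<N. g (v p r $ l))"
    if "0 \<le> r" "r < T0" for r
    by (intro tendsto_sum isCont_tendsto_compose[OF gc] tendsto_vec_nth v_lim that) simp
  show ?thesis
  proof (rule tendsto_le[OF _ lim lim])
    show "\<forall>\<^sub>F k in sequentially. (\<Sum>p<N. g (vs (\<phi> k) p t $ l)) \<le> (\<Sum>p<N. g (vs (\<phi> k) p s $ l))"
      using ev_phi_ge[of 2] by eventually_elim (rule Psi_mono[OF _ g mh], use st T0_le in auto)
  qed (use st in auto)
qed

end



definition gp :: "real \<Rightarrow> real \<Rightarrow> real" where
  "gp c u = (max (u - c) 0)^2"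

lemma gp_deriv: "(gp c has_real_derivative 2 * max (u - c) 0) (at u)"
proof -
  consider "u > c" | "u < c" | "u = c" by linarith
  then show ?thesis
  proof cases
    case 1
    have "((\<lambda>u. (u - c)^2) has_real_derivative 2 * (u - c)) (at u)"
      by (auto intro!: derivative_eq_intros)
    then have "(gp c has_real_derivative 2 * (u - c)) (at u)"
      by (rule has_field_derivative_transform_within_open[of _ _ _ "{c<..}"]) (use 1 in \<open>auto simp: gp_def\<close>)
    then show ?thesis using 1 by simp
  next
    case 2
    have "((\<lambda>u. 0) has_real_derivative 0) (at u)" by simp
    then have "(gp c has_real_derivative 0) (at u)"
      by (rule has_field_derivative_transform_within_open[of _ _ _ "{..<c}"]) (use 2 in \<open>auto simp: gp_def\<close>)
    then show ?thesis using 2 by simp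
  next
    case 3
    have "(\<lambda>h. (gp c (u + h) - gp c u) / h) \<midarrow>0\<rightarrow> 0"
    proof (rule Lim_null_comparison)
      show "\<forall>\<^sub>F h in at 0. norm ((gp c (u + h) - gp c u) / h) \<le> norm h"
      proof (rule always_eventually, rule allI)
        fix h :: real
        show "norm ((gp c (u + h) - gp c u) / h) \<le> norm h"
        proof (cases "h > 0")
          case True
          then have "gp c (u + h) = h^2" "gp c u = 0" using 3 by (auto simp: gp_def)
          then show ?thesis using True by (simp add: power2_eq_square)
        next
          case False
          then have "gp c (u + h) = 0" "gp c u = 0" using 3 by (auto simp: gp_def)
          then show ?thesis by simp
        qed
      qed
      show "(norm \<longlongrightarrow> 0) (at (0::real))"
        by (rule tendsto_norm_zero[OF tendsto_ident_at])
    qed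
    then show ?thesis using 3 by (simp add: DERIV_def)
  qed
qed
lemma gp_mono: "mono (\<lambda>u::real. 2 * max (u - c) 0)"
  by (auto simp: mono_def)

lemma gp_nonneg: "gp c u \<ge> 0" by (simp add: gp_def)

definition bump :: "real \<Rightarrow> real \<Rightarrow> real \<Rightarrow> real" where
  "bump c h u = gp c u - 3 * gp (c + h) u + 3 * gp (c + 2*h) u - gp (c + 3*h) u"

lemma bump_nonneg:
  assumes h: "h > 0" shows "bump c h u \<ge> 0"
proof -
  consider "u \<le> c" | "c \<le> u" "u \<le> c + h" | "c + h \<le> u" "u \<le> c + 2*h"
    | "c + 2*h \<le> u" "u \<le> c + 3*h" | "c + 3*h \<le> u" by linarith
  then show ?thesis
  proof cases
    case 1
    then have m: "max (u-c) 0 = 0" "max (u-(c+h)) 0 = 0" "max (u-(c+2*h)) 0 = 0" "max (u-(c+3*h)) 0 = 0"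
      using h by auto
    show ?thesis unfolding bump_def gp_def m by simp
  next
    case 2
    then have m: "max (u-c) 0 = u-c" "max (u-(c+h)) 0 = 0" "max (u-(c+2*h)) 0 = 0" "max (u-(c+3*h)) 0 = 0"
      using h by auto
    show ?thesis unfolding bump_def gp_def m by simp
  next
    case 3
    then have m: "max (u-c) 0 = u-c" "max (u-(c+h)) 0 = u-c-h" "max (u-(c+2*h)) 0 = 0" "max (u-(c+3*h)) 0 = 0"
      using h by auto
    have e: "bump c h u = (u - c)^2 - 3 * (u - c - h)^2" unfolding bump_def gp_def m by simp
    have "(u - c)^2 - 3 * (u - c - h)^2 = h^2 + 2 * ((u - c - h) * (c + 2*h - u))"
      by (simp add: power2_eq_square algebra_simps)
    moreover have "(u - c - h) * (c + 2*h - u) \<ge> 0" using 3 by (intro mult_nonneg_nonneg) auto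
    ultimately show ?thesis using e by (simp add: add_nonneg_nonneg)
  next
    case 4
    then have m: "max (u-c) 0 = u-c" "max (u-(c+h)) 0 = u-c-h" "max (u-(c+2*h)) 0 = u-c-2*h" "max (u-(c+3*h)) 0 = 0"
      using h by auto
    have e: "bump c h u = (u - c)^2 - 3 * (u - c - h)^2 + 3 * (u - c - 2*h)^2" unfolding bump_def gp_def m by simp
    have "(u - c)^2 - 3 * (u - c - h)^2 + 3 * (u - c - 2*h)^2 = (c + 3*h - u)^2"
      by (simp add: power2_eq_square algebra_simps)
    then show ?thesis using e by simp
  next
    case 5
    then have m: "max (u-c) 0 = u-c" "max (u-(c+h)) 0 = u-c-h" "max (u-(c+2*h)) 0 = u-c-2*h" "max (u-(c+3*h)) 0 = u-c-3*h"
      using h by auto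
    have e: "bump c h u = (u - c)^2 - 3 * (u - c - h)^2 + 3 * (u - c - 2*h)^2 - (u - c - 3*h)^2" unfolding bump_def gp_def m by simp
    have "(u - c)^2 - 3 * (u - c - h)^2 + 3 * (u - c - 2*h)^2 - (u - c - 3*h)^2 = 0"
      by (simp add: power2_eq_square algebra_simps)
    then show ?thesis using e by simp
  qed
qed

lemma bump_pos_imp:
  assumes h: "h > 0" and p: "bump c h u > 0" shows "c < u \<and> u < c + 3*h"
proof (rule ccontr)
  assume "\<not> (c < u \<and> u < c + 3*h)"
  then consider "u \<le> c" | "c + 3*h \<le> u" by linarith
  then have "bump c h u = 0"
  proof cases
    case 1
    then have m: "max (u-c) 0 = 0" "max (u-(c+h)) 0 = 0" "max (u-(c+2*h)) 0 = 0" "max (u-(c+3*h)) 0 = 0"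
      using h by auto
    show ?thesis unfolding bump_def gp_def m by simp
  next
    case 2
    then have m: "max (u-c) 0 = u-c" "max (u-(c+h)) 0 = u-c-h" "max (u-(c+2*h)) 0 = u-c-2*h" "max (u-(c+3*h)) 0 = u-c-3*h"
      using h by auto
    have e: "bump c h u = (u - c)^2 - 3 * (u - c - h)^2 + 3 * (u - c - 2*h)^2 - (u - c - 3*h)^2" unfolding bump_def gp_def m by simp
    have "(u - c)^2 - 3 * (u - c - h)^2 + 3 * (u - c - 2*h)^2 - (u - c - 3*h)^2 = 0"
      by (simp add: power2_eq_square algebra_simps)
    then show ?thesis using e by simp
  qed
  then show False using p by simp
qed

lemma bump_center:
  assumes h: "h > 0" shows "bump c h (c + 3*h/2) > 0"
proof -
  have m: "max (c + 3*h/2-c) 0 = 3*h/2" "max (c + 3*h/2-(c+h)) 0 = h/2" "max (c + 3*h/2-(c+2*h)) 0 = 0" "max (c + 3*h/2-(c+3*h)) 0 = 0"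
      using h by auto
  have "bump c h (c + 3*h/2) = (3*h/2)^2 - 3 * (h/2)^2" unfolding bump_def gp_def m by simp
  also have "\<dots> = 3/2 * h^2" by (simp add: power2_eq_square)
  finally have "bump c h (c + 3*h/2) = 3/2 * h^2" .
  moreover have "h^2 > 0" using h by simp
  ultimately show ?thesis by (simp only:)
qed




lemma evF_I:
  fixes T0 s :: real
  assumes "s < T0" "\<And>t. s < t \<Longrightarrow> t < T0 \<Longrightarrow> P t"
  shows "eventually P (at T0 within {0..<T0})"
  unfolding eventually_at
proof (intro exI[of _ "T0 - s"] conjI ballI impI)
  show "T0 - s > 0" using assms by simp
  fix t assume t: "t \<in> {0..<T0}" "t \<noteq> T0 \<and> dist t T0 < T0 - s"
  then show "P t" using assms(2)[of t] by (auto simp: dist_real_def)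
qed

lemma evF_D:
  fixes T0 :: real
  assumes T0: "T0 > 0" and ev: "eventually P (at T0 within {0..<T0})"
  shows "\<exists>s<T0. \<forall>t. s < t \<and> t < T0 \<longrightarrow> P t"
proof -
  obtain d where d: "d > 0" "\<And>t. t \<in> {0..<T0} \<Longrightarrow> t \<noteq> T0 \<and> dist t T0 < d \<Longrightarrow> P t"
    using ev unfolding eventually_at by blast
  show ?thesis
  proof (intro exI[of _ "max 0 (T0 - d)"] conjI allI impI)
    show "max 0 (T0 - d) < T0" using T0 d by simp
    fix t assume "max 0 (T0 - d) < t \<and> t < T0"
    then show "P t" using d(2)[of t] by (auto simp: dist_real_def)
  qed
qed

lemma freqF:
  fixes T0 s :: real
  assumes "\<not> eventually P (at T0 within {0..<T0})" "s < T0"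
  shows "\<exists>t. s < t \<and> t < T0 \<and> \<not> P t"
  using evF_I[of s T0 P] assms by blast

lemma F_nonbot:
  fixes T0 :: real
  assumes "T0 > 0" shows "at T0 within {0..<T0} \<noteq> bot"
proof -
  have "T0 islimpt {0..<T0}" using assms by simp
  then show ?thesis using trivial_limit_within[of T0 "{0..<T0}"] by simp
qed

lemma dec_conv:
  fixes f :: "real \<Rightarrow> real"
  assumes T0: "T0 > 0" and dec: "\<And>s t. 0 \<le> s \<Longrightarrow> s \<le> t \<Longrightarrow> t < T0 \<Longrightarrow> f t \<le> f s"
    and lb: "\<And>t. 0 \<le> t \<Longrightarrow> t < T0 \<Longrightarrow> B \<le> f t"
  shows "\<exists>L. (f \<longlongrightarrow> L) (at T0 within {0..<T0})"
proof -
  define L where "L = Inf (f ` {0..<T0})"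
  have ne: "f ` {0..<T0} \<noteq> {}" using T0 by auto
  have bdd: "bdd_below (f ` {0..<T0})" using lb by (auto intro!: bdd_belowI)
  have Lle: "L \<le> f t" if "0 \<le> t" "t < T0" for t
    unfolding L_def by (rule cInf_lower[OF _ bdd]) (use that in auto)
  have "(f \<longlongrightarrow> L) (at T0 within {0..<T0})"
  proof (rule order_tendstoI)
    fix a assume "a < L"
    show "eventually (\<lambda>t. a < f t) (at T0 within {0..<T0})"
      by (rule evF_I[of 0]) (use T0 Lle \<open>a < L\<close> in \<open>auto intro: less_le_trans\<close>)
  next
    fix a assume "L < a"
    then obtain t0 where t0: "t0 \<in> {0..<T0}" "f t0 < a"
      using cInf_lessD[OF ne] unfolding L_def by blast
    show "eventually (\<lambda>t. f t < a) (at T0 within {0..<T0})"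
    proof (rule evF_I[of t0])
      fix t assume "t0 < t" "t < T0"
      then have "f t \<le> f t0" using dec[of t0 t] t0 by auto
      then show "f t < a" using t0 by simp
    qed (use t0 in auto)
  qed
  then show ?thesis by blast
qed

lemma osc_or_conv:
  fixes f :: "real \<Rightarrow> real"
  assumes nb: "F \<noteq> bot" and bnd: "eventually (\<lambda>t. \<bar>f t\<bar> \<le> R) F"
  shows "(\<exists>w. (f \<longlongrightarrow> w) F) \<or>
     (\<exists>a b. a < b \<and> \<not> eventually (\<lambda>t. a \<le> f t) F \<and> \<not> eventually (\<lambda>t. f t \<le> b) F)"
proof -
  define li where "li = Liminf F (\<lambda>t. ereal (f t))"
  define ls where "ls = Limsup F (\<lambda>t. ereal (f t))"
  have ntriv: "\<not> trivial_limit F" using nb by simp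
  have le: "li \<le> ls" unfolding li_def ls_def by (rule Liminf_le_Limsup[OF ntriv])
  have lb: "ereal (- R) \<le> li" unfolding li_def
    by (rule Liminf_bounded) (use bnd in \<open>auto elim!: eventually_mono\<close>)
  have ub: "ls \<le> ereal R" unfolding ls_def
    by (rule Limsup_bounded) (use bnd in \<open>auto elim!: eventually_mono\<close>)
  show ?thesis
  proof (cases "li = ls")
    case True
    then have "((\<lambda>t. ereal (f t)) \<longlongrightarrow> li) F"
      unfolding li_def ls_def using tendsto_iff_Liminf_eq_Limsup[OF ntriv] by auto
    moreover obtain w where "li = ereal w" using lb ub True by (cases li) auto
    ultimately have "(f \<longlongrightarrow> w) F" by simp
    then show ?thesis by blast
  next
    case False
    then have "li < ls" using le by simp
    then obtain a where a: "li < ereal a" "ereal a < ls" using ereal_dense2 by blast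
    then obtain b where b: "ereal a < ereal b" "ereal b < ls" using ereal_dense2 by blast
    have "\<not> eventually (\<lambda>t. a \<le> f t) F"
    proof
      assume "eventually (\<lambda>t. a \<le> f t) F"
      then have "ereal a \<le> li" unfolding li_def by (intro Liminf_bounded) (auto elim!: eventually_mono)
      then show False using a by simp
    qed
    moreover have "\<not> eventually (\<lambda>t. f t \<le> b) F"
    proof
      assume "eventually (\<lambda>t. f t \<le> b) F"
      then have "ls \<le> ereal b" unfolding ls_def by (intro Limsup_bounded) (auto elim!: eventually_mono)
      then show False using b by simp
    qed
    ultimately show ?thesis using b by auto
  qed
qed




lemma conv_main:
  fixes y :: "nat \<Rightarrow> real \<Rightarrow> real" and T0 :: real
  assumes T0: "T0 > 0"
    and cont: "\<And>p t. p < N \<Longrightarrow> t < T0 \<Longrightarrow> continuous_on {0..t} (y p)"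
    and monoc: "\<And>c s t. 0 \<le> s \<Longrightarrow> s \<le> t \<Longrightarrow> t < T0 \<Longrightarrow>
                   (\<Sum>p<N. gp c (y p t)) \<le> (\<Sum>p<N. gp c (y p s))"
    and bnd: "\<And>p t. p < N \<Longrightarrow> 0 \<le> t \<Longrightarrow> t < T0 \<Longrightarrow> \<bar>y p t\<bar> \<le> R"
    and i: "i < N"
  shows "\<exists>w. (y i \<longlongrightarrow> w) (at T0 within {0..<T0})"
proof -
  define F where "F = at T0 within {0..<T0}"
  have nb: "F \<noteq> bot" unfolding F_def by (rule F_nonbot[OF T0])
  have evb: "eventually (\<lambda>t. \<bar>y i t\<bar> \<le> R) F"
    unfolding F_def by (rule evF_I[of 0]) (use T0 bnd i in auto)
  show ?thesis
  proof (cases "\<exists>w. (y i \<longlongrightarrow> w) F")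
    case True then show ?thesis unfolding F_def by blast
  next
    case False
    then obtain a b where ab: "a < b" "\<not> eventually (\<lambda>t. a \<le> y i t) F" "\<not> eventually (\<lambda>t. y i t \<le> b) F"
      using osc_or_conv[OF nb evb] by blast
    have hit: "\<exists>t. s < t \<and> t < T0 \<and> y i t = m" if m: "a < m" "m < b" and s: "s < T0" for m s
    proof -
      obtain t1 where t1: "max s 0 < t1" "t1 < T0" "y i t1 < a"
        using freqF[OF ab(2)[unfolded F_def], of "max s 0"] s T0 by auto
      obtain t2 where t2: "t1 < t2" "t2 < T0" "y i t2 > b"
        using freqF[OF ab(3)[unfolded F_def], of t1] t1 by auto
      have "continuous_on {t1..t2} (y i)"
        by (rule continuous_on_subset[OF cont[OF i t2(2)]]) (use t1 in auto)
      then obtain t where "t1 \<le> t" "t \<le> t2" "y i t = m"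
        using IVT'[of "y i" t1 m t2] t1 t2 m by auto
      then show ?thesis using t1 t2 by (intro exI[of _ t]) auto
    qed
    define h where "h = (b - a) / (3 * (real N + 1))"
    have h: "h > 0" unfolding h_def using ab by simp
    define c where "c k = a + 3 * h * real k" for k :: nat
    define H where "H k t = (\<Sum>p<N. bump (c k) h (y p t))" for k t
    have Psi_conv: "\<exists>L. ((\<lambda>t. \<Sum>p<N. gp c' (y p t)) \<longlongrightarrow> L) F" for c'
      unfolding F_def by (rule dec_conv[OF T0 monoc, of _ 0]) (auto intro: sum_nonneg gp_nonneg)
    have H_conv: "\<exists>L. (H k \<longlongrightarrow> L) F" for k
    proof -
      obtain L1 where L1: "((\<lambda>t. \<Sum>p<N. gp (c k) (y p t)) \<longlongrightarrow> L1) F" using Psi_conv by blast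
      obtain L2 where L2: "((\<lambda>t. \<Sum>p<N. gp (c k + h) (y p t)) \<longlongrightarrow> L2) F" using Psi_conv by blast
      obtain L3 where L3: "((\<lambda>t. \<Sum>p<N. gp (c k + 2*h) (y p t)) \<longlongrightarrow> L3) F" using Psi_conv by blast
      obtain L4 where L4: "((\<lambda>t. \<Sum>p<N. gp (c k + 3*h) (y p t)) \<longlongrightarrow> L4) F" using Psi_conv by blast
      have eq: "H k = (\<lambda>t. (\<Sum>p<N. gp (c k) (y p t)) - 3 * (\<Sum>p<N. gp (c k + h) (y p t))
                 + 3 * (\<Sum>p<N. gp (c k + 2*h) (y p t)) - (\<Sum>p<N. gp (c k + 3*h) (y p t)))"
        unfolding H_def bump_def by (simp add: fun_eq_iff sum.distrib sum_subtractf sum_distrib_left)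
      show ?thesis unfolding eq using tendsto_diff[OF tendsto_add[OF tendsto_diff[OF L1 tendsto_mult[OF tendsto_const L2]] tendsto_mult[OF tendsto_const L3]] L4] by blast
    qed
    have evpos: "eventually (\<lambda>t. H k t > 0) F" if k: "k \<le> N" for k
    proof -
      define m where "m = c k + 3*h/2"
      have ma: "a < m" unfolding m_def c_def using h by (simp add: add_nonneg_pos)
      have "real k * (3*h) \<le> real N * (3*h)"
        using k h by (intro mult_right_mono) auto
      moreover have "(real N + 1) * (3*h) = real N * (3*h) + 3*h" by (simp add: algebra_simps)
      ultimately have "real k * (3*h) + 3*h/2 < (real N + 1) * (3*h)"
        using h by linarith
      moreover have "(real N + 1) * (3*h) = b - a" unfolding h_def by (simp add: field_simps)
      ultimately have mb: "m < b" unfolding m_def c_def by (simp add: algebra_simps)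
      define \<beta> where "\<beta> = bump (c k) h m"
      have \<beta>: "\<beta> > 0" unfolding \<beta>_def m_def by (rule bump_center[OF h])
      obtain L where L: "(H k \<longlongrightarrow> L) F" using H_conv by blast
      have "L \<ge> \<beta>"
      proof (rule ccontr)
        assume "\<not> L \<ge> \<beta>"
        then have "eventually (\<lambda>t. H k t < \<beta>) F" using order_tendstoD(2)[OF L] by simp
        then obtain s where s: "s < T0" "\<And>t. s < t \<Longrightarrow> t < T0 \<Longrightarrow> H k t < \<beta>"
          using evF_D[OF T0] unfolding F_def by blast
        obtain t where t: "s < t" "t < T0" "y i t = m" using hit[OF ma mb s(1)] by blast
        have "\<beta> \<le> H k t" unfolding H_def \<beta>_def
          using member_le_sum[of i "{..<N}" "\<lambda>p. bump (c k) h (y p t)"] i t(3) bump_nonneg[OF h] by auto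
        then show False using s(2)[OF t(1,2)] by simp
      qed
      then show ?thesis using order_tendstoD(1)[OF L, of 0] \<beta> by simp
    qed
    have "eventually (\<lambda>t. \<forall>k\<in>{..N}. H k t > 0) F"
      by (rule eventually_ball_finite) (use evpos in auto)
    obtain t where t: "\<And>k. k \<le> N \<Longrightarrow> H k t > 0"
      using eventually_happens'[OF nb \<open>eventually (\<lambda>t. \<forall>k\<in>{..N}. H k t > 0) F\<close>] by auto
    have "\<forall>k\<in>{..N}. \<exists>p. p < N \<and> bump (c k) h (y p t) > 0"
    proof
      fix k assume "k \<in> {..N}"
      then have "H k t > 0" using t by auto
      then show "\<exists>p. p < N \<and> bump (c k) h (y p t) > 0"
        unfolding H_def by (metis (no_types, lifting) lessThan_iff not_less sum_nonpos)
    qed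
    then obtain f where f: "\<And>k. k \<in> {..N} \<Longrightarrow> f k < N \<and> bump (c k) h (y (f k) t) > 0"
      by metis
    have fin: "\<And>k. k \<in> {..N} \<Longrightarrow> c k < y (f k) t \<and> y (f k) t < c k + 3*h"
      using f bump_pos_imp[OF h] by blast
    have inj: "inj_on f {..N}"
    proof (rule inj_onI)
      fix k1 k2 assume k: "k1 \<in> {..N}" "k2 \<in> {..N}" "f k1 = f k2"
      show "k1 = k2"
      proof (rule ccontr)
        assume ne: "k1 \<noteq> k2"
        have sep: "c k' + 3*h \<le> c k''" if "k' < k''" for k' k''
        proof -
          have "real k' + 1 \<le> real k''" using that by simp
          then have "3*h*(real k' + 1) \<le> 3*h*real k''" using h by (intro mult_left_mono) auto
          then show ?thesis unfolding c_def by (simp add: algebra_simps)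
        qed
        show False
        proof (cases "k1 < k2")
          case True
          then show False using sep[OF True] fin[OF k(1)] fin[OF k(2)] k(3) by simp
        next
          case False
          then have "k2 < k1" using ne by simp
          then show False using sep[of k2 k1] fin[OF k(1)] fin[OF k(2)] k(3) by simp
        qed
      qed
    qed
    have "card {..N} \<le> card {..<N}"
      by (rule card_inj_on_le[OF inj]) (use f in auto)
    then show ?thesis by simp
  qed
qed




context setting begin

lemma comp_conv:
  assumes T0p: "T0 > 0" and i: "i < N"
  shows "\<exists>w. ((\<lambda>t. v i t $ l) \<longlongrightarrow> w) (at T0 within {0..<T0})"
proof -
  define E where "E = (\<Sum>p<N. (v p 0 $ l)^2)"
  have sq_der: "((\<lambda>u. u^2) has_real_derivative 2 * u) (at u)" for u :: real
    by (auto intro!: derivative_eq_intros)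
  have sq_mono: "mono (\<lambda>u::real. 2 * u)" by (auto simp: mono_def)
  show ?thesis
  proof (rule conv_main[OF T0p _ _ _ i, of _ "sqrt E"])
    fix p t assume "p < N" "t < T0"
    then show "continuous_on {0..t} (\<lambda>t. v p t $ l)"
      by (intro continuous_on_component v_cont)
  next
    fix c s t :: real assume "0 \<le> s" "s \<le> t" "t < T0"
    then show "(\<Sum>p<N. gp c (v p t $ l)) \<le> (\<Sum>p<N. gp c (v p s $ l))"
      by (intro Psi_mono_lim[OF gp_deriv gp_mono])
  next
    fix p t assume p: "p < N" and t: "0 \<le> t" "t < T0"
    have "(\<Sum>p<N. (v p t $ l)^2) \<le> E"
      unfolding E_def by (rule Psi_mono_lim[OF sq_der sq_mono]) (use t in auto)
    moreover have "(v p t $ l)^2 \<le> (\<Sum>p<N. (v p t $ l)^2)"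
      using member_le_sum[of p "{..<N}" "\<lambda>p. (v p t $ l)^2"] p by auto
    ultimately have "(v p t $ l)^2 \<le> E" by linarith
    then show "\<bar>v p t $ l\<bar> \<le> sqrt E"
      using real_sqrt_le_mono by fastforce
  qed
qed

lemma vec_conv:
  assumes T0p: "T0 > 0" and i: "i < N"
  shows "\<exists>w. (v i \<longlongrightarrow> w) (at T0 within {0..<T0})"
proof -
  have "\<forall>l. \<exists>w. ((\<lambda>t. v i t $ l) \<longlongrightarrow> w) (at T0 within {0..<T0})"
    using comp_conv[OF T0p i] by blast
  then obtain W where W: "\<And>l. ((\<lambda>t. v i t $ l) \<longlongrightarrow> W l) (at T0 within {0..<T0})"
    by metis
  have "(v i \<longlongrightarrow> (\<chi> l. W l)) (at T0 within {0..<T0})"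
    by (rule vec_tendstoI) (simp add: W)
  then show ?thesis by blast
qed

end



lemma psi_lower:
  assumes a: "0 < \<alpha>" "\<alpha> < 1" and dd: "0 < dd" and dn: "0 < dn" "dn \<le> 2 * dd"
  shows "psi \<alpha> dn \<ge> psi \<alpha> dd / 2"
proof -
  have "dn powr (-\<alpha>) \<ge> (2 * dd) powr (-\<alpha>)"
    by (rule powr_mono2') (use a dn in auto)
  moreover have "(2 * dd) powr (-\<alpha>) = 2 powr (-\<alpha>) * dd powr (-\<alpha>)"
    using dd by (simp add: powr_mult)
  moreover have "2 powr (-\<alpha>) \<ge> 2 powr (-1::real)"
    by (rule powr_mono) (use a in auto)
  moreover have "(2::real) powr (-1::real) = 1/2" by (simp add: powr_minus)
  moreover have "dd powr (-\<alpha>) \<ge> 0" by simp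
  ultimately have "dn powr (-\<alpha>) \<ge> 1/2 * dd powr (-\<alpha>)"
    by (smt (verit, best) mult_right_mono)
  then show ?thesis using dd dn by (simp add: psi_def)
qed

lemma norm_diff_pair:
  fixes a b a' b' :: "'a::real_normed_vector"
  shows "\<bar>norm (a - b) - norm (a' - b')\<bar> \<le> norm (a - a') + norm (b - b')"
proof -
  have "\<bar>norm (a - b) - norm (a' - b')\<bar> \<le> norm ((a - b) - (a' - b'))"
    by (rule norm_triangle_ineq3)
  also have "(a - b) - (a' - b') = (a - a') - (b - b')" by (simp add: algebra_simps)
  also have "norm \<dots> \<le> norm (a - a') + norm (b - b')" by (rule norm_triangle_ineq4)
  finally show ?thesis .
qed

context setting begin

lemma int_bound_n:
  assumes n: "n \<ge> 2" and st: "0 \<le> s" "s < t" "t \<le> T" and ij: "i < N" "j < N" and \<kappa>: "\<kappa> \<ge> 0"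
    and qc: "continuous_on {s..t} q"
    and lowa: "\<And>r. r \<in> {s..t} \<Longrightarrow> psin n (norm (xs n i r - xs n j r)) *
         ((2 * max (vs n i r $ l - c) 0 - 2 * max (vs n j r $ l - c) 0) * (vs n i r $ l - vs n j r $ l)) \<ge> \<kappa> * q r"
  shows "(\<Sum>p<N. gp c (vs n p t $ l)) + (\<kappa> / (2 * real N)) * integral {s..t} q \<le> (\<Sum>p<N. gp c (vs n p s $ l))"
proof -
  define G where "G r = (\<Sum>p<N. gp c (vs n p r $ l)) + (\<kappa> / (2 * real N)) * integral {s..r} q" for r
  have Np: "real N > 0" using N by simp
  have Psider: "\<exists>D. ((\<lambda>t. \<Sum>p<N. gp c (vs n p t $ l)) has_real_derivative D) (at r within {0..T}) \<and>
       D \<le> - (1 / (2 * real N)) * (\<kappa> * q r)" if r: "r \<in> {s..t}" for r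
  proof -
    have rT: "r \<in> {0..T}" using r st by auto
    obtain D where D: "((\<lambda>t. \<Sum>p<N. gp c (vs n p t $ l)) has_real_derivative D) (at r within {0..T})"
       "D \<le> - (1 / (2 * real N)) * (psin n (norm (xs n i r - xs n j r)) *
          ((2 * max (vs n i r $ l - c) 0 - 2 * max (vs n j r $ l - c) 0) * (vs n i r $ l - vs n j r $ l)))"
      using Psi_deriv[OF n rT gp_deriv gp_mono ij, of c l] by blast
    moreover have "- (1 / (2 * real N)) * (psin n (norm (xs n i r - xs n j r)) *
          ((2 * max (vs n i r $ l - c) 0 - 2 * max (vs n j r $ l - c) 0) * (vs n i r $ l - vs n j r $ l)))
          \<le> - (1 / (2 * real N)) * (\<kappa> * q r)"
      using lowa[OF r] Np by (simp add: divide_simps)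
    ultimately show ?thesis by force
  qed
  have Psicont: "continuous_on {s..t} (\<lambda>t. \<Sum>p<N. gp c (vs n p t $ l))"
  proof -
    have "continuous (at r within {0..T}) (\<lambda>t. \<Sum>p<N. gp c (vs n p t $ l))" if "r \<in> {s..t}" for r
      using Psider[OF that] DERIV_continuous by blast
    then have "continuous (at r within {s..t}) (\<lambda>t. \<Sum>p<N. gp c (vs n p t $ l))" if "r \<in> {s..t}" for r
      using that st continuous_within_subset[of r "{0..T}"] by (meson atLeastatMost_subset_iff)
    then show ?thesis by (simp add: continuous_on_eq_continuous_within)
  qed
  have intder: "((\<lambda>r. integral {s..r} q) has_real_derivative q r) (at r within {s..t})" if "r \<in> {s..t}" for r
    by (rule integral_has_real_derivative[OF qc that])
  have intcont: "continuous_on {s..t} (\<lambda>r. integral {s..r} q)"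
    using intder DERIV_continuous continuous_on_eq_continuous_within by blast
  have "G t \<le> G s"
  proof (rule DERIV_nonpos_imp_decreasing_open[of s t G])
    show "s \<le> t" using st by simp
  next
    show "continuous_on {s..t} G" unfolding G_def
      by (intro continuous_intros Psicont intcont)
  next
    fix r assume r: "s < r" "r < t"
    then have rin: "r \<in> {s..t}" by auto
    have i1: "r \<in> interior {0..T}" using r st by auto
    have i2: "r \<in> interior {s..t}" using r by auto
    obtain D where D: "((\<lambda>t. \<Sum>p<N. gp c (vs n p t $ l)) has_real_derivative D) (at r within {0..T})"
       "D \<le> - (1 / (2 * real N)) * (\<kappa> * q r)" using Psider[OF rin] by blast
    have D': "((\<lambda>t. \<Sum>p<N. gp c (vs n p t $ l)) has_real_derivative D) (at r)"
      using D(1) at_within_interior[OF i1] by simp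
    have I': "((\<lambda>r. integral {s..r} q) has_real_derivative q r) (at r)"
      using intder[OF rin] at_within_interior[OF i2] by simp
    have "(G has_real_derivative D + (\<kappa> / (2 * real N)) * q r) (at r)"
      unfolding G_def by (intro DERIV_add D' DERIV_cmult I')
    moreover have "D + (\<kappa> / (2 * real N)) * q r \<le> 0" using D(2) by simp
    ultimately show "\<exists>y. (G has_real_derivative y) (at r) \<and> y \<le> 0" by blast
  qed
  then show ?thesis unfolding G_def by simp
qed

lemma int_bound_lim:
  assumes T0p: "T0 > 0" and i: "i < N" and j: "j \<in> Bset N x0 v0 i" and \<epsilon>: "\<epsilon> > 0"
    and s: "0 < s" "s < T0"
    and yi: "\<And>r. s \<le> r \<Longrightarrow> r < T0 \<Longrightarrow> v i r $ l > c + 2 * \<epsilon>"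
    and yj: "\<And>r. s \<le> r \<Longrightarrow> r < T0 \<Longrightarrow> v j r $ l < c - 2 * \<epsilon>"
    and t: "s < t" "t < T0"
  shows "integral {s..t} (\<lambda>r. psi \<alpha> (norm (x i r - x j r)))
           \<le> real N * ((\<Sum>p<N. gp c (v p s $ l)) + 1) / \<epsilon>^2"
proof -
  have jN: "j < N" using j Bset_lt by auto
  define d where "d r = norm (x i r - x j r)" for r
  have tT: "t \<le> T" using t T0_le by simp
  have dpos: "d r > 0" if "r \<in> {s..t}" for r
    using sep[OF i j, of r] that s t unfolding d_def by auto
  have dcont: "continuous_on {s..t} d" unfolding d_def
    by (intro continuous_intros continuous_on_subset[OF x_cont[OF i]] continuous_on_subset[OF x_cont[OF jN]])
       (use s tT in auto)
  have qc: "continuous_on {s..t} (\<lambda>r. psi \<alpha> (d r))"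
  proof -
    have "continuous_on {s..t} (\<lambda>r. d r powr (-\<alpha>))"
      by (rule continuous_on_powr'[OF dcont continuous_on_const]) (use dpos in \<open>fastforce simp: less_imp_le\<close>)
    then show ?thesis by (rule continuous_on_cong[THEN iffD1, rotated 2]) (use dpos in \<open>auto simp: psi_def\<close>)
  qed
  obtain r0 where r0: "r0 \<in> {s..t}" "\<And>r. r \<in> {s..t} \<Longrightarrow> d r0 \<le> d r"
    using continuous_attains_inf[OF compact_Icc _ dcont] t by auto
  define \<delta> where "\<delta> = d r0"
  have \<delta>: "\<delta> > 0" unfolding \<delta>_def using dpos r0 by auto
  have "((\<lambda>n. real n powr (-1/\<alpha>)) \<longlongrightarrow> 0) sequentially"
    by (rule tendsto_neg_powr) (use alpha in \<open>auto simp: filterlim_real_sequentially\<close>)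
  then have "eventually (\<lambda>n. real n powr (-1/\<alpha>) < \<delta>/2) sequentially"
    by (rule order_tendstoD(2)) (use \<delta> in simp)
  then obtain M where M: "\<And>n. n \<ge> M \<Longrightarrow> real n powr (-1/\<alpha>) < \<delta>/2"
    by (auto simp: eventually_sequentially)
  define Ps where "Ps = (\<Sum>p<N. gp c (v p s $ l))"
  have gc: "isCont (gp c) u" for u using gp_deriv DERIV_isCont by blast
  have Pslim: "(\<lambda>k. \<Sum>p<N. gp c (vs (\<phi> k) p s $ l)) \<longlonglongrightarrow> Ps"
    unfolding Ps_def by (intro tendsto_sum isCont_tendsto_compose[OF gc] tendsto_vec_nth v_lim) (use s in auto)
  have ev: "eventually (\<lambda>k. \<phi> k \<ge> M + 2 \<and>
      (\<forall>r\<in>{0..T}. dist (xs (\<phi> k) i r) (x i r) < \<delta>/4) \<and>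
      (\<forall>r\<in>{0..T}. dist (xs (\<phi> k) j r) (x j r) < \<delta>/4) \<and>
      (\<forall>r\<in>{0..t}. dist (vs (\<phi> k) i r) (v i r) < \<epsilon>) \<and>
      (\<forall>r\<in>{0..t}. dist (vs (\<phi> k) j r) (v j r) < \<epsilon>) \<and>
      (\<Sum>p<N. gp c (vs (\<phi> k) p s $ l)) < Ps + 1) sequentially"
  proof -
    have t0: "0 \<le> t" using s t by simp
    have q4: "\<delta>/4 > 0" using \<delta> by simp
    show ?thesis
      by (intro eventually_conj ev_phi_ge uniform_limitD[OF unif[OF i] q4] uniform_limitD[OF unif[OF jN] q4]
          uniform_limitD[OF C1[OF i t0 t(2)] \<epsilon>] uniform_limitD[OF C1[OF jN t0 t(2)] \<epsilon>]
          order_tendstoD(2)[OF Pslim]) simp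
  qed
  then obtain k where k: "\<phi> k \<ge> M + 2"
      "\<And>r. r\<in>{0..T} \<Longrightarrow> dist (xs (\<phi> k) i r) (x i r) < \<delta>/4"
      "\<And>r. r\<in>{0..T} \<Longrightarrow> dist (xs (\<phi> k) j r) (x j r) < \<delta>/4"
      "\<And>r. r\<in>{0..t} \<Longrightarrow> dist (vs (\<phi> k) i r) (v i r) < \<epsilon>"
      "\<And>r. r\<in>{0..t} \<Longrightarrow> dist (vs (\<phi> k) j r) (v j r) < \<epsilon>"
      "(\<Sum>p<N. gp c (vs (\<phi> k) p s $ l)) < Ps + 1"
    using eventually_happens'[OF sequentially_bot] by blast
  define n where "n = \<phi> k"
  have n2: "n \<ge> 2" using k(1) unfolding n_def by simp
  have lowa: "psin n (norm (xs n i r - xs n j r)) *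
         ((2 * max (vs n i r $ l - c) 0 - 2 * max (vs n j r $ l - c) 0) * (vs n i r $ l - vs n j r $ l))
         \<ge> (2 * \<epsilon>^2) * psi \<alpha> (d r)" if r: "r \<in> {s..t}" for r
  proof -
    have rT: "r \<in> {0..T}" and rt: "r \<in> {0..t}" using r s tT by auto
    define dn where "dn = norm (xs n i r - xs n j r)"
    have "\<bar>dn - d r\<bar> \<le> norm (xs n i r - x i r) + norm (xs n j r - x j r)"
      unfolding dn_def d_def by (rule norm_diff_pair)
    moreover have "norm (xs n i r - x i r) < \<delta>/4" "norm (xs n j r - x j r) < \<delta>/4"
      using k(2)[OF rT] k(3)[OF rT] unfolding n_def by (auto simp: dist_norm)
    ultimately have dn1: "\<bar>dn - d r\<bar> < \<delta>/2" by linarith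
    have dr: "d r \<ge> \<delta>" using r0(2)[OF r] unfolding \<delta>_def .
    have dn2: "dn - d r < \<delta>/2" "d r - dn < \<delta>/2" using dn1 abs_less_iff[of "dn - d r" "\<delta>/2"] by auto
    have dnp: "dn \<ge> \<delta>/2" using dn2 dr by linarith
    have dn3: "dn \<le> 2 * d r" using dn2 dr by linarith
    have "real (n - 1) powr (-1/\<alpha>) < \<delta>/2" using M[of "n-1"] k(1) unfolding n_def by simp
    then have "psin n dn = psi \<alpha> dn" using psin_eq_psi[OF n2, of dn] dnp by simp
    moreover have "psi \<alpha> dn \<ge> psi \<alpha> (d r) / 2"
      by (rule psi_lower[OF alpha]) (use dn3 dr dnp \<delta> in auto)
    ultimately have a1: "psin n dn \<ge> psi \<alpha> (d r) / 2" by simp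
    have vi: "vs n i r $ l > c + \<epsilon>"
    proof -
      have "\<bar>vs n i r $ l - v i r $ l\<bar> < \<epsilon>"
        using k(4)[OF rt] component_le_norm_cart[of "vs n i r - v i r" l] unfolding n_def by (simp add: dist_norm)
      then show ?thesis using yi[of r] r t by auto
    qed
    have vj: "vs n j r $ l < c - \<epsilon>"
    proof -
      have "\<bar>vs n j r $ l - v j r $ l\<bar> < \<epsilon>"
        using k(5)[OF rt] component_le_norm_cart[of "vs n j r - v j r" l] unfolding n_def by (simp add: dist_norm)
      then show ?thesis using yj[of r] r t by auto
    qed
    have "(2 * max (vs n i r $ l - c) 0 - 2 * max (vs n j r $ l - c) 0) * (vs n i r $ l - vs n j r $ l)
          = (2 * (vs n i r $ l - c)) * (vs n i r $ l - vs n j r $ l)" using vi vj \<epsilon> by simp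
    also have "\<dots> \<ge> (2 * \<epsilon>) * (2 * \<epsilon>)"
      by (rule mult_mono) (use vi vj \<epsilon> in auto)
    finally have pr: "(2 * max (vs n i r $ l - c) 0 - 2 * max (vs n j r $ l - c) 0) * (vs n i r $ l - vs n j r $ l)
          \<ge> 4 * \<epsilon>^2" by (simp add: power2_eq_square)
    have "(psi \<alpha> (d r) / 2) * (4 * \<epsilon>^2) \<le> psin n dn *
         ((2 * max (vs n i r $ l - c) 0 - 2 * max (vs n j r $ l - c) 0) * (vs n i r $ l - vs n j r $ l))"
      by (rule mult_mono[OF a1 pr]) (use psi_nonneg[of "d r"] psin_nonneg[OF n2, of dn] in \<open>auto simp: dn_def\<close>)
    then show ?thesis unfolding dn_def by (simp add: algebra_simps)
  qed
  have main: "(\<Sum>p<N. gp c (vs n p t $ l)) + ((2 * \<epsilon>^2) / (2 * real N)) * integral {s..t} (\<lambda>r. psi \<alpha> (d r))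
      \<le> (\<Sum>p<N. gp c (vs n p s $ l))"
    by (rule int_bound_n[OF n2 _ t(1) tT i jN _ qc lowa]) (use s in auto)
  have "(\<Sum>p<N. gp c (vs n p t $ l)) \<ge> 0" by (intro sum_nonneg gp_nonneg)
  then have "((2 * \<epsilon>^2) / (2 * real N)) * integral {s..t} (\<lambda>r. psi \<alpha> (d r)) \<le> Ps + 1"
    using main k(6) unfolding n_def by linarith
  moreover have Np: "real N > 0" using N by simp
  ultimately have "integral {s..t} (\<lambda>r. psi \<alpha> (d r)) \<le> real N * (Ps + 1) / \<epsilon>^2"
    using \<epsilon> by (simp add: field_simps)
  then show ?thesis unfolding d_def Ps_def .
qed

end



lemma nn_fin_from_bound:
  fixes f :: "real \<Rightarrow> real"
  assumes sT: "s < T0" and nn: "\<And>r. 0 \<le> f r"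
    and cont: "\<And>t. s < t \<Longrightarrow> t < T0 \<Longrightarrow> continuous_on {s..t} f"
    and bnd: "\<And>t. s < t \<Longrightarrow> t < T0 \<Longrightarrow> integral {s..t} f \<le> C"
  shows "(\<integral>\<^sup>+ r\<in>{s..T0}. ennreal (f r) \<partial>lborel) \<noteq> \<infinity>"
proof -
  define tk where "tk k = T0 - (T0 - s) * inverse (real (Suc (Suc k)))" for k
  have tk: "s < tk k" "tk k < T0" for k
  proof -
    have "inverse (real (Suc (Suc k))) < 1" "inverse (real (Suc (Suc k))) > 0" by (auto simp: field_simps)
    then have "(T0 - s) * inverse (real (Suc (Suc k))) < (T0 - s)" "(T0 - s) * inverse (real (Suc (Suc k))) > 0"
      using sT by auto
    then show "s < tk k" "tk k < T0" unfolding tk_def by auto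
  qed
  have tkmono: "tk k \<le> tk (Suc k)" for k
  proof -
    have "inverse (real (Suc (Suc (Suc k)))) \<le> inverse (real (Suc (Suc k)))"
      by (rule le_imp_inverse_le) auto
    then show ?thesis unfolding tk_def using sT by (simp add: mult_left_mono)
  qed
  have tklim: "tk \<longlonglongrightarrow> T0"
  proof -
    have "(\<lambda>k. inverse (real (Suc (Suc k)))) \<longlonglongrightarrow> 0"
      using LIMSEQ_Suc[OF LIMSEQ_inverse_real_of_nat] by simp
    then have "(\<lambda>k. T0 - (T0 - s) * inverse (real (Suc (Suc k)))) \<longlonglongrightarrow> T0 - (T0 - s) * 0"
      by (intro tendsto_intros)
    then show ?thesis unfolding tk_def by simp
  qed
  define S where "S = {s..T0}"
  define fk where "fk k r = (if r \<in> {s..tk k} then f r else 0)" for k r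
  define g where "g r = (if r \<in> {s..<T0} then f r else 0)" for r
  have Sint: "{s..tk k} \<inter> S = {s..tk k}" for k using tk[of k] unfolding S_def by auto
  have fint: "f integrable_on {s..tk k}" for k
    using cont[OF tk] by (rule integrable_continuous_interval)
  have fkint: "fk k integrable_on S" for k
    unfolding fk_def integrable_restrict_Int Sint by (rule fint)
  have fkI: "integral S (fk k) = integral {s..tk k} f" for k
    unfolding fk_def integral_restrict_Int Sint ..
  have mc: "g integrable_on S \<and> ((\<lambda>k. integral S (fk k)) \<longlonglongrightarrow> integral S g)"
  proof (rule monotone_convergence_increasing[OF fkint])
    fix k r assume "r \<in> S"
    then show "fk k r \<le> fk (Suc k) r" using tkmono[of k] nn[of r] unfolding fk_def by auto
  next
    fix r assume r: "r \<in> S"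
    show "(\<lambda>k. fk k r) \<longlonglongrightarrow> g r"
    proof (cases "r < T0")
      case True
      have "eventually (\<lambda>k. r < tk k) sequentially" by (rule order_tendstoD(1)[OF tklim True])
      then have "eventually (\<lambda>k. fk k r = g r) sequentially"
        by eventually_elim (use r True in \<open>auto simp: fk_def g_def S_def\<close>)
      then show ?thesis by (rule tendsto_eventually)
    next
      case False
      then have "fk k r = g r" for k using tk[of k] unfolding fk_def g_def by auto
      then show ?thesis by simp
    qed
  next
    have ic: "integral S (fk k) \<in> {0..C}" for k
      unfolding fkI using bnd[OF tk] integral_nonneg[OF fint] nn by auto
    have b: "norm (integral S (fk k)) \<le> \<bar>C\<bar>" for k
    proof -
      have "0 \<le> integral S (fk k)" "integral S (fk k) \<le> C" using ic[of k] by auto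
      then show ?thesis by simp
    qed
    show "bounded (range (\<lambda>k. integral S (fk k)))"
    proof (rule boundedI[of _ "\<bar>C\<bar>"])
      fix y assume "y \<in> range (\<lambda>k. integral S (fk k))"
      then obtain k where "y = integral S (fk k)" by blast
      then show "norm y \<le> \<bar>C\<bar>" using b[of k] by simp
    qed
  qed
  have "f integrable_on S"
    by (rule integrable_spike_finite[of "{T0}" S f g]) (use mc in \<open>auto simp: g_def S_def\<close>)
  then have hi: "(f has_integral integral S f) S" by (rule integrable_integral)
  have "integral\<^sup>N lborel (\<lambda>x. indicator S x * f x) = integral S f"
    by (rule nn_integral_has_integral_lebesgue[OF _ hi]) (use nn in auto)
  moreover have "(\<integral>\<^sup>+ r\<in>{s..T0}. ennreal (f r) \<partial>lborel) = integral\<^sup>N lborel (\<lambda>x. indicator S x * f x)"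
    by (rule nn_integral_cong) (auto simp: S_def indicator_def)
  ultimately show ?thesis by simp
qed

context setting begin

lemma psid_cont:
  assumes i: "i < N" and j: "j \<in> Bset N x0 v0 i" and ab: "0 < a" "b < T0"
  shows "continuous_on {a..b} (\<lambda>r. psi \<alpha> (norm (x i r - x j r)))"
proof -
  have jN: "j < N" using j Bset_lt by auto
  define d where "d r = norm (x i r - x j r)" for r
  have bT: "b \<le> T" using ab T0_le by simp
  have dpos: "d r > 0" if "r \<in> {a..b}" for r
    using sep[OF i j, of r] that ab unfolding d_def by auto
  have dcont: "continuous_on {a..b} d" unfolding d_def
    by (intro continuous_intros continuous_on_subset[OF x_cont[OF i]] continuous_on_subset[OF x_cont[OF jN]])
       (use ab bT in auto)
  have "continuous_on {a..b} (\<lambda>r. d r powr (-\<alpha>))"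
    by (rule continuous_on_powr'[OF dcont continuous_on_const]) (use dpos in \<open>fastforce simp: less_imp_le\<close>)
  then have "continuous_on {a..b} (\<lambda>r. psi \<alpha> (d r))"
    by (rule continuous_on_cong[THEN iffD1, rotated 2]) (use dpos in \<open>auto simp: psi_def\<close>)
  then show ?thesis unfolding d_def .
qed

lemma fin_int:
  assumes T0p: "T0 > 0" and i: "i < N" and j: "j \<in> Bset N x0 v0 i"
    and wi: "((\<lambda>t. v i t $ l) \<longlongrightarrow> wi) (at T0 within {0..<T0})"
    and wj: "((\<lambda>t. v j t $ l) \<longlongrightarrow> wj) (at T0 within {0..<T0})"
    and gt: "wi > wj"
  shows "\<exists>s\<in>{0..<T0}. (\<integral>\<^sup>+ r\<in>{s..T0}. ennreal (psi \<alpha> (norm (x i r - x j r))) \<partial>lborel) \<noteq> \<infinity>"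
proof -
  define c where "c = (wi + wj) / 2"
  define \<epsilon> where "\<epsilon> = (wi - wj) / 6"
  have \<epsilon>: "\<epsilon> > 0" unfolding \<epsilon>_def using gt by simp
  have e1: "eventually (\<lambda>t. v i t $ l > c + 2 * \<epsilon>) (at T0 within {0..<T0})"
    by (rule order_tendstoD(1)[OF wi]) (simp add: c_def \<epsilon>_def field_simps gt)
  have e2: "eventually (\<lambda>t. v j t $ l < c - 2 * \<epsilon>) (at T0 within {0..<T0})"
    by (rule order_tendstoD(2)[OF wj]) (simp add: c_def \<epsilon>_def field_simps gt)
  obtain s1 where s1: "s1 < T0" "\<And>t. s1 < t \<Longrightarrow> t < T0 \<Longrightarrow> v i t $ l > c + 2 * \<epsilon> \<and> v j t $ l < c - 2 * \<epsilon>"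
    using evF_D[OF T0p eventually_conj[OF e1 e2]] by blast
  define s where "s = (max s1 0 + T0) / 2"
  have s: "0 < s" "s < T0" "s1 < s" using s1 T0p unfolding s_def by auto
  define C where "C = real N * ((\<Sum>p<N. gp c (v p s $ l)) + 1) / \<epsilon>^2"
  have "(\<integral>\<^sup>+ r\<in>{s..T0}. ennreal (psi \<alpha> (norm (x i r - x j r))) \<partial>lborel) \<noteq> \<infinity>"
  proof (rule nn_fin_from_bound[OF s(2) psi_nonneg])
    fix t assume t: "s < t" "t < T0"
    show "continuous_on {s..t} (\<lambda>r. psi \<alpha> (norm (x i r - x j r)))"
      by (rule psid_cont[OF i j s(1) t(2)])
    show "integral {s..t} (\<lambda>r. psi \<alpha> (norm (x i r - x j r))) \<le> C"
      unfolding C_def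
      by (rule int_bound_lim[OF T0p i j \<epsilon> s(1,2) _ _ t]) (use s1 s in auto)
  qed
  then show ?thesis using s by (intro bexI[of _ s]) auto
qed

end



lemma vd_inner:
  fixes f g :: "real \<Rightarrow> 'a::real_inner"
  assumes "(f has_vector_derivative f') (at x within S)" "(g has_vector_derivative g') (at x within S)"
  shows "((\<lambda>t. f t \<bullet> g t) has_real_derivative (f x \<bullet> g' + f' \<bullet> g x)) (at x within S)"
proof -
  have "((\<lambda>t. f t \<bullet> g t) has_derivative (\<lambda>h. f x \<bullet> (h *\<^sub>R g') + (h *\<^sub>R f') \<bullet> g x)) (at x within S)"
    using has_derivative_inner[OF assms[unfolded has_vector_derivative_def]] .
  then show ?thesis unfolding has_field_derivative_def
    by (rule has_derivative_eq_rhs) (simp add: fun_eq_iff algebra_simps)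
qed

lemma gronwall_zero:
  fixes D D' :: "real \<Rightarrow> real"
  assumes der: "\<And>t. t \<in> {0..T} \<Longrightarrow> (D has_real_derivative D' t) (at t within {0..T})"
    and le: "\<And>t. t \<in> {0..T} \<Longrightarrow> D' t \<le> K * D t"
    and D0: "D 0 = 0" and nn: "\<And>t. t \<in> {0..T} \<Longrightarrow> 0 \<le> D t"
    and t: "t \<in> {0..T}"
  shows "D t = 0"
proof -
  define E where "E t = exp (- K * t) * D t" for t
  have Eder: "(E has_real_derivative exp (- K * r) * (D' r - K * D r)) (at r within {0..T})"
    if r: "r \<in> {0..T}" for r
  proof -
    have e: "((\<lambda>t. exp (- K * t)) has_real_derivative exp (- K * r) * (- K)) (at r within {0..T})"
      by (auto intro!: derivative_eq_intros)
    have "(E has_real_derivative (exp (- K * r) * (- K)) * D r + D' r * exp (- K * r)) (at r within {0..T})"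
      unfolding E_def by (rule DERIV_mult[OF e der[OF r]])
    then show ?thesis by (simp add: algebra_simps)
  qed
  have "E t \<le> E 0"
  proof (rule DERIV_nonpos_imp_decreasing_open[of 0 t E])
    show "0 \<le> t" using t by simp
  next
    have "continuous (at r within {0..T}) E" if "r \<in> {0..T}" for r
      using Eder[OF that] DERIV_continuous by blast
    then have "continuous_on {0..T} E" by (simp add: continuous_on_eq_continuous_within)
    then show "continuous_on {0..t} E" by (rule continuous_on_subset) (use t in auto)
  next
    fix r assume r: "0 < r" "r < t"
    then have ri: "r \<in> interior {0..T}" using t by auto
    have "(E has_real_derivative exp (- K * r) * (D' r - K * D r)) (at r)"
      using Eder[of r] r t at_within_interior[OF ri] by auto
    moreover have "exp (- K * r) * (D' r - K * D r) \<le> 0"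
      using le[of r] r t by (simp add: mult_nonneg_nonpos)
    ultimately show "\<exists>y. (E has_real_derivative y) (at r) \<and> y \<le> 0" by blast
  qed
  then have "exp (- K * t) * D t \<le> 0" unfolding E_def using D0 by simp
  then have "D t \<le> 0" by (simp add: mult_le_0_iff)
  then show ?thesis using nn[OF t] by simp
qed

context setting begin

lemma psin_lip:
  assumes n: "n \<ge> 1"
  shows "\<exists>L\<ge>0. \<forall>s1 s2. 0 \<le> s1 \<longrightarrow> s1 \<le> R \<longrightarrow> 0 \<le> s2 \<longrightarrow> s2 \<le> R \<longrightarrow>
            \<bar>psin n s1 - psin n s2\<bar> \<le> L * \<bar>s1 - s2\<bar>"
proof -
  define f where "f = psin n"
  define \<delta> where "\<delta> = real n powr (-1/\<alpha>)"
  have \<delta>: "\<delta> > 0" unfolding \<delta>_def using n by simp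
  have sm: "smooth_on {0<..} f" using cutoff n unfolding cutoff_family_def f_def by auto
  have const: "f s = real n" if "0 \<le> s" "s \<le> \<delta>" for s
    using psin_const[OF n that(1)] that unfolding \<delta>_def f_def by simp
  have d0: "f differentiable_on {0<..}" using sm unfolding smooth_on_def by (metis funpow_0)
  have d1: "deriv f differentiable_on {0<..}"
  proof -
    have "(deriv ^^ 1) f differentiable_on {0<..}" using sm unfolding smooth_on_def by blast
    then show ?thesis by simp
  qed
  have fder: "(f has_real_derivative deriv f s) (at s)" if "s > 0" for s
  proof -
    have "f differentiable at s" using d0 that differentiable_on_eq_differentiable_at[of "{0<..}" f] by auto
    then show ?thesis using DERIV_deriv_iff_real_differentiable by blast
  qed
  have dcont: "continuous_on {0<..} (deriv f)" using d1 by (rule differentiable_imp_continuous_on)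
  define R' where "R' = max \<delta> R"
  have dcont': "continuous_on {\<delta>..R'} (\<lambda>s. \<bar>deriv f s\<bar>)"
    by (intro continuous_intros continuous_on_subset[OF dcont]) (use \<delta> in auto)
  obtain s0 where s0: "s0 \<in> {\<delta>..R'}" "\<And>s. s \<in> {\<delta>..R'} \<Longrightarrow> \<bar>deriv f s\<bar> \<le> \<bar>deriv f s0\<bar>"
    using continuous_attains_sup[OF compact_Icc _ dcont'] unfolding R'_def by auto
  define M where "M = \<bar>deriv f s0\<bar>"
  have lipd: "\<bar>f a - f b\<bar> \<le> M * \<bar>a - b\<bar>" if ab: "\<delta> \<le> a" "a \<le> R'" "\<delta> \<le> b" "b \<le> R'" for a b
  proof -
    have gen: "\<bar>f a - f b\<bar> \<le> M * \<bar>a - b\<bar>" if ab: "\<delta> \<le> a" "a < b" "b \<le> R'" for a b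
    proof -
      obtain z where z: "a < z" "z < b" "f b - f a = (b - a) * deriv f z"
        using MVT2[OF ab(2), of f "deriv f"] fder ab \<delta> by force
      have "\<bar>deriv f z\<bar> \<le> M" unfolding M_def using s0(2)[of z] z ab by auto
      then have "\<bar>(b - a) * deriv f z\<bar> \<le> (b - a) * M" using ab by (simp add: abs_mult mult_left_mono)
      then show ?thesis using z ab by (simp add: abs_minus_commute mult.commute)
    qed
    consider "a < b" | "a = b" | "b < a" by linarith
    then show ?thesis
    proof cases
      case 1 then show ?thesis using gen[of a b] ab by simp
    next
      case 2 then show ?thesis by simp
    next
      case 3 then show ?thesis using gen[of b a] ab by (simp add: abs_minus_commute)
    qed
  qed
  have M0: "M \<ge> 0" unfolding M_def by simp
  show ?thesis
  proof (intro exI[of _ M] conjI allI impI)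
    show "0 \<le> M" by (rule M0)
    fix s1 s2 assume s: "0 \<le> s1" "s1 \<le> R" "0 \<le> s2" "s2 \<le> R"
    define a where "a = max s1 \<delta>"
    define b where "b = max s2 \<delta>"
    have fa: "f s1 = f a" unfolding a_def using const[of s1] const[of \<delta>] s \<delta> by (cases "s1 \<le> \<delta>") auto
    have fb: "f s2 = f b" unfolding b_def using const[of s2] const[of \<delta>] s \<delta> by (cases "s2 \<le> \<delta>") auto
    have "\<bar>f a - f b\<bar> \<le> M * \<bar>a - b\<bar>" by (rule lipd) (use s in \<open>auto simp: a_def b_def R'_def\<close>)
    also have "\<dots> \<le> M * \<bar>s1 - s2\<bar>" by (rule mult_left_mono[OF _ M0]) (auto simp: a_def b_def)
    finally show "\<bar>psin n s1 - psin n s2\<bar> \<le> M * \<bar>s1 - s2\<bar>" using fa fb unfolding f_def by simp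
  qed
qed

lemma bound_cont:
  fixes f :: "nat \<Rightarrow> real \<Rightarrow> 'a::real_normed_vector"
  assumes "\<And>k. k < N \<Longrightarrow> continuous_on {0..T} (f k)"
  shows "\<exists>V. \<forall>k<N. \<forall>t\<in>{0..T}. norm (f k t) \<le> V"
proof -
  have c: "continuous_on {0..T} (\<lambda>t. \<Sum>k<N. norm (f k t))"
    by (intro continuous_intros assms) auto
  obtain t0 where t0: "\<And>t. t \<in> {0..T} \<Longrightarrow> (\<Sum>k<N. norm (f k t)) \<le> (\<Sum>k<N. norm (f k t0))"
    using continuous_attains_sup[OF compact_Icc _ c] T by fastforce
  show ?thesis
  proof (intro exI[of _ "\<Sum>k<N. norm (f k t0)"] allI impI ballI)
    fix k t assume "k < N" "t \<in> {0..T}"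
    then show "norm (f k t) \<le> (\<Sum>k<N. norm (f k t0))"
      using member_le_sum[of k "{..<N}" "\<lambda>k. norm (f k t)"] t0[of t] by force
  qed
qed

lemma same_data:
  assumes i: "i < N" and j: "j < N" and x0: "x0 i = x0 j" and v0: "v0 i = v0 j" and n: "n \<ge> 1"
    and t: "t \<in> {0..T}"
  shows "vs n i t = vs n j t"
proof -
  obtain V where V: "\<And>k t. k < N \<Longrightarrow> t \<in> {0..T} \<Longrightarrow> norm (vs n k t) \<le> V"
    using bound_cont[of "vs n", OF vs_cont[OF n]] by blast
  obtain X where X: "\<And>k t. k < N \<Longrightarrow> t \<in> {0..T} \<Longrightarrow> norm (xs n k t) \<le> X"
    using bound_cont[of "xs n", OF xs_cont[OF n]] by blast
  define R where "R = 2 * X"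
  have Rb: "norm (xs n p t - xs n k t) \<le> R" if "p < N" "k < N" "t \<in> {0..T}" for p k t
    using norm_triangle_ineq4[of "xs n p t" "xs n k t"] X[of p t] X[of k t] that unfolding R_def by linarith
  obtain L where L: "L \<ge> 0" "\<And>s1 s2. 0 \<le> s1 \<Longrightarrow> s1 \<le> R \<Longrightarrow> 0 \<le> s2 \<Longrightarrow> s2 \<le> R \<Longrightarrow>
            \<bar>psin n s1 - psin n s2\<bar> \<le> L * \<bar>s1 - s2\<bar>"
    using psin_lip[OF n, of R] by blast
  define A where "A = real n + L * R"
  have T0': "0 \<in> {0..T}" using T by simp
  have V0: "V \<ge> 0" using V[OF i T0'] norm_ge_zero[of "vs n i 0"] by linarith
  have R0: "R \<ge> 0" using Rb[OF i i T0'] norm_ge_zero[of "xs n i 0 - xs n i 0"] by linarith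
  have A0: "A \<ge> 0" unfolding A_def using L(1) R0 by simp
  have Ab: "\<bar>psin n s\<bar> \<le> A" if "0 \<le> s" "s \<le> R" for s
  proof -
    have "psin n 0 = real n" using psin_const[OF n] by simp
    moreover have "\<bar>psin n s - psin n 0\<bar> \<le> L * \<bar>s - 0\<bar>" using L(2)[of s 0] that R0 by simp
    moreover have "L * s \<le> L * R" using that L(1) by (simp add: mult_left_mono)
    ultimately show ?thesis unfolding A_def using that by simp
  qed
  define u where "u t = xs n i t - xs n j t" for t
  define w where "w t = vs n i t - vs n j t" for t
  define fr where "fr p t = (1 / real N) *\<^sub>R (\<Sum>k<N. psin n (norm (xs n p t - xs n k t)) *\<^sub>R (vs n k t - vs n p t))" for p t
  define D where "D t = u t \<bullet> u t + w t \<bullet> w t" for t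
  define D' where "D' t = 2 * (u t \<bullet> w t) + 2 * (w t \<bullet> (fr i t - fr j t))" for t
  define K where "K = 1 + 2 * V * L + 2 * A"
  have uder: "(u has_vector_derivative w r) (at r within {0..T})" if "r \<in> {0..T}" for r
    unfolding u_def w_def using ode_x[OF n i that] ode_x[OF n j that] by (rule has_vector_derivative_diff)
  have wder: "(w has_vector_derivative (fr i r - fr j r)) (at r within {0..T})" if "r \<in> {0..T}" for r
    unfolding w_def fr_def using ode_v[OF n i that] ode_v[OF n j that] by (rule has_vector_derivative_diff)
  have Dder: "(D has_real_derivative D' r) (at r within {0..T})" if r: "r \<in> {0..T}" for r
  proof -
    have "(D has_real_derivative (u r \<bullet> w r + w r \<bullet> u r) + (w r \<bullet> (fr i r - fr j r) + (fr i r - fr j r) \<bullet> w r))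
            (at r within {0..T})"
      unfolding D_def by (intro DERIV_add vd_inner uder wder r)
    then show ?thesis unfolding D'_def by (simp add: inner_commute)
  qed
  have frb: "norm (fr i r - fr j r) \<le> 2 * V * L * norm (u r) + A * norm (w r)" if r: "r \<in> {0..T}" for r
  proof -
    have trm: "norm (psin n (norm (xs n i r - xs n k r)) *\<^sub>R (vs n k r - vs n i r)
               - psin n (norm (xs n j r - xs n k r)) *\<^sub>R (vs n k r - vs n j r))
           \<le> 2 * V * L * norm (u r) + A * norm (w r)" if k: "k < N" for k
    proof -
      define ai where "ai = psin n (norm (xs n i r - xs n k r))"
      define aj where "aj = psin n (norm (xs n j r - xs n k r))"
      have eq: "ai *\<^sub>R (vs n k r - vs n i r) - aj *\<^sub>R (vs n k r - vs n j r)
              = (ai - aj) *\<^sub>R (vs n k r - vs n i r) - aj *\<^sub>R w r"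
        unfolding w_def by (simp add: algebra_simps)
      have d1: "\<bar>ai - aj\<bar> \<le> L * norm (u r)"
      proof -
        have "\<bar>ai - aj\<bar> \<le> L * \<bar>norm (xs n i r - xs n k r) - norm (xs n j r - xs n k r)\<bar>"
          unfolding ai_def aj_def by (rule L(2)) (use Rb i j k r in auto)
        also have "\<dots> \<le> L * (norm (xs n i r - xs n j r) + norm (xs n k r - xs n k r))"
          by (rule mult_left_mono[OF norm_diff_pair L(1)])
        finally show ?thesis unfolding u_def by simp
      qed
      have d2: "norm (vs n k r - vs n i r) \<le> 2 * V"
        using norm_triangle_ineq4[of "vs n k r" "vs n i r"] V[OF k r] V[OF i r] by linarith
      have d3: "\<bar>aj\<bar> \<le> A" unfolding aj_def by (rule Ab) (use Rb j k r in auto)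
      have "norm ((ai - aj) *\<^sub>R (vs n k r - vs n i r) - aj *\<^sub>R w r)
            \<le> \<bar>ai - aj\<bar> * norm (vs n k r - vs n i r) + \<bar>aj\<bar> * norm (w r)"
        using norm_triangle_ineq4[of "(ai - aj) *\<^sub>R (vs n k r - vs n i r)" "aj *\<^sub>R w r"] by simp
      also have "\<dots> \<le> (L * norm (u r)) * (2 * V) + A * norm (w r)"
        by (intro add_mono mult_mono d1 d2 d3) (use L(1) A0 in auto)
      finally show ?thesis unfolding ai_def aj_def eq[unfolded ai_def aj_def] by (simp add: algebra_simps)
    qed
    have "fr i r - fr j r = (1 / real N) *\<^sub>R (\<Sum>k<N. psin n (norm (xs n i r - xs n k r)) *\<^sub>R (vs n k r - vs n i r)
               - psin n (norm (xs n j r - xs n k r)) *\<^sub>R (vs n k r - vs n j r))"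
      unfolding fr_def by (simp add: sum_subtractf scaleR_diff_right)
    then have "norm (fr i r - fr j r) \<le> (1 / real N) * (\<Sum>k<N. norm (psin n (norm (xs n i r - xs n k r)) *\<^sub>R (vs n k r - vs n i r)
               - psin n (norm (xs n j r - xs n k r)) *\<^sub>R (vs n k r - vs n j r)))"
      using divide_right_mono[OF norm_sum, of "real N"] by simp
    also have "\<dots> \<le> (1 / real N) * (\<Sum>k<N. 2 * V * L * norm (u r) + A * norm (w r))"
      by (intro mult_left_mono sum_mono trm) auto
    also have "\<dots> = 2 * V * L * norm (u r) + A * norm (w r)" using N by simp
    finally show ?thesis .
  qed
  have Dle: "D' r \<le> K * D r" if r: "r \<in> {0..T}" for r
  proof -
    define a where "a = norm (u r)"
    define b where "b = norm (w r)"
    have a0: "a \<ge> 0" and b0: "b \<ge> 0" unfolding a_def b_def by auto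
    have c0: "2 * V * L \<ge> 0" using V0 L(1) by simp
    have Dr: "D r = a^2 + b^2" unfolding D_def a_def b_def by (simp add: power2_norm_eq_inner)
    have "u r \<bullet> w r \<le> a * b" unfolding a_def b_def by (rule norm_cauchy_schwarz)
    moreover have "w r \<bullet> (fr i r - fr j r) \<le> b * norm (fr i r - fr j r)" unfolding b_def by (rule norm_cauchy_schwarz)
    moreover have "b * norm (fr i r - fr j r) \<le> b * (2 * V * L * a + A * b)"
      using frb[OF r] b0 unfolding a_def b_def by (simp add: mult_left_mono)
    ultimately have "D' r \<le> 2 * (a * b) + 2 * (b * (2 * V * L * a + A * b))" unfolding D'_def by linarith
    also have "\<dots> = (1 + 2 * V * L) * (2 * a * b) + 2 * A * b^2" by (simp add: algebra_simps power2_eq_square)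
    also have "\<dots> \<le> (1 + 2 * V * L) * (a^2 + b^2) + 2 * A * (a^2 + b^2)"
    proof (intro add_mono mult_left_mono)
      have "0 \<le> (a - b)^2" by simp
      then show "2 * a * b \<le> a^2 + b^2" by (simp add: power2_eq_square algebra_simps)
      show "b^2 \<le> a^2 + b^2" by simp
    qed (use c0 A0 in auto)
    also have "\<dots> = K * D r" unfolding K_def Dr by (simp add: algebra_simps)
    finally show ?thesis .
  qed
  have D0: "D 0 = 0" unfolding D_def u_def w_def using init[OF n i] init[OF n j] x0 v0 by simp
  have "D t = 0"
    by (rule gronwall_zero[OF Dder Dle D0 _ t]) (auto simp: D_def)
  then have "w t \<bullet> w t = 0" unfolding D_def by (metis add_nonneg_eq_0_iff inner_ge_zero)
  then show ?thesis unfolding w_def by simp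
qed

end



context setting begin

lemma Bset_sym: "j \<in> Bset N x0 v0 i \<Longrightarrow> i < N \<Longrightarrow> i \<in> Bset N x0 v0 j"
  by (auto simp: Bset_def)

lemma edge:
  assumes T0p: "T0 > 0" and e: "(p, q) \<in> dotsim N \<alpha> x0 v0 x T0"
  shows "Lim (at T0 within {0..<T0}) (v p) = Lim (at T0 within {0..<T0}) (v q)"
proof -
  define F where "F = at T0 within {0..<T0}"
  have nt: "\<not> trivial_limit F" unfolding F_def using F_nonbot[OF T0p] by simp
  have pq: "p < N" "q < N" using e by (auto simp: dotsim_def)
  obtain Wp where Wp: "(v p \<longlongrightarrow> Wp) F" using vec_conv[OF T0p pq(1)] unfolding F_def by blast
  obtain Wq where Wq: "(v q \<longlongrightarrow> Wq) F" using vec_conv[OF T0p pq(2)] unfolding F_def by blast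
  have LWp: "Lim F (v p) = Wp" by (rule tendsto_Lim[OF nt Wp])
  have LWq: "Lim F (v q) = Wq" by (rule tendsto_Lim[OF nt Wq])
  have "Wp = Wq"
  proof (cases "q \<in> Bset N x0 v0 p")
    case False
    then have d: "x0 p = x0 q" "v0 p = v0 q" using pq by (auto simp: Bset_def)
    have eqv: "v p t = v q t" if t: "0 \<le> t" "t < T0" for t
    proof -
      have "(\<lambda>k. vs (\<phi> k) p t) \<longlonglongrightarrow> v q t"
      proof (rule Lim_transform_eventually[OF v_lim[OF pq(2) t]])
        show "\<forall>\<^sub>F k in sequentially. vs (\<phi> k) q t = vs (\<phi> k) p t"
          by (rule always_eventually, rule allI, rule same_data[symmetric])
             (use pq d subseq(2) t T0_le in auto)
      qed
      then show ?thesis using v_lim[OF pq(1) t] LIMSEQ_unique by blast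
    qed
    have "(v q \<longlongrightarrow> Wp) F"
    proof (rule Lim_transform_eventually[OF Wp])
      show "eventually (\<lambda>t. v p t = v q t) F"
        unfolding F_def by (rule evF_I[of 0]) (use T0p eqv in auto)
    qed
    then show ?thesis using Wq tendsto_unique[OF nt] by blast
  next
    case True
    then have inf: "\<forall>t\<in>{0..<T0}. (\<integral>\<^sup>+ s\<in>{t..T0}. ennreal (psi \<alpha> (norm (x p s - x q s))) \<partial>lborel) = \<infinity>"
      using e by (auto simp: dotsim_def)
    show ?thesis
    proof (rule ccontr)
      assume "Wp \<noteq> Wq"
      then obtain l where l: "Wp $ l \<noteq> Wq $ l" by (auto simp: vec_eq_iff)
      have cp: "((\<lambda>t. v p t $ l) \<longlongrightarrow> Wp $ l) F" by (rule tendsto_vec_nth[OF Wp])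
      have cq: "((\<lambda>t. v q t $ l) \<longlongrightarrow> Wq $ l) F" by (rule tendsto_vec_nth[OF Wq])
      show False
      proof (cases "Wp $ l > Wq $ l")
        case True
        then obtain s where "s \<in> {0..<T0}" "(\<integral>\<^sup>+ r\<in>{s..T0}. ennreal (psi \<alpha> (norm (x p r - x q r))) \<partial>lborel) \<noteq> \<infinity>"
          using fin_int[OF T0p pq(1) \<open>q \<in> Bset N x0 v0 p\<close> cp[unfolded F_def] cq[unfolded F_def]] by blast
        then show False using inf by blast
      next
        case False
        then have gt: "Wq $ l > Wp $ l" using l by simp
        obtain s where "s \<in> {0..<T0}" "(\<integral>\<^sup>+ r\<in>{s..T0}. ennreal (psi \<alpha> (norm (x q r - x p r))) \<partial>lborel) \<noteq> \<infinity>"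
          using fin_int[OF T0p pq(2) Bset_sym[OF \<open>q \<in> Bset N x0 v0 p\<close> pq(1)] cq[unfolded F_def] cp[unfolded F_def] gt] by blast
        then show False using inf by (simp add: norm_minus_commute)
      qed
    qed
  qed
  then show ?thesis unfolding F_def[symmetric] LWp LWq .
qed

theorem main: "\<forall>i<N. \<exists>vbar. \<forall>j\<in>eqclass N \<alpha> x0 v0 x T0 i.
            (v j \<longlongrightarrow> vbar) (at T0 within {0..<T0})"
proof (cases "T0 > 0")
  case False
  then have "T0 = 0" using T0_ge by simp
  then show ?thesis by simp
next
  case True
  define F where "F = at T0 within {0..<T0}"
  have nt: "\<not> trivial_limit F" unfolding F_def using F_nonbot[OF True] by simp
  define D where "D = dotsim N \<alpha> x0 v0 x T0"
  have edge_eq: "Lim F (v a) = Lim F (v b)" if "(a, b) \<in> D \<union> D\<inverse>" for a b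
    using that edge[OF True] unfolding F_def D_def by auto
  have chain: "Lim F (v i) = Lim F (v j)" if "(i, j) \<in> (D \<union> D\<inverse>)\<^sup>*" for i j
    using that
  proof (induction rule: rtrancl_induct)
    case base then show ?case by simp
  next
    case (step y z) then show ?case using edge_eq[of y z] by simp
  qed
  show ?thesis
  proof (intro allI impI exI ballI)
    fix i j assume i: "i < N" and j: "j \<in> eqclass N \<alpha> x0 v0 x T0 i"
    then have jN: "j < N" and r: "(i, j) \<in> (D \<union> D\<inverse>)\<^sup>*" by (auto simp: eqclass_def D_def)
    obtain W where W: "(v j \<longlongrightarrow> W) F" using vec_conv[OF True jN] unfolding F_def by blast
    have "Lim F (v j) = W" by (rule tendsto_Lim[OF nt W])
    then show "(v j \<longlongrightarrow> Lim F (v i)) (at T0 within {0..<T0})"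
      using W chain[OF r] unfolding F_def by simp
  qed
qed

end

theorem corollary2p3:
  fixes N :: nat and \<alpha> T T0 :: real
    and psin :: "nat \<Rightarrow> real \<Rightarrow> real"
    and x0 v0 :: "nat \<Rightarrow> real ^ 'd"
    and xs vs :: "nat \<Rightarrow> nat \<Rightarrow> real \<Rightarrow> real ^ 'd"
    and \<phi> :: "nat \<Rightarrow> nat"
    and x v :: "nat \<Rightarrow> real \<Rightarrow> real ^ 'd"
  assumes N: "N \<ge> 1"
    and alpha: "0 < \<alpha>" "\<alpha> < 1"
    and cutoff: "cutoff_family \<alpha> psin"
    and T: "T > 0"
    and init: "\<And>n i. n \<ge> 1 \<Longrightarrow> i < N \<Longrightarrow> xs n i 0 = x0 i \<and> vs n i 0 = v0 i"
    and ode_x: "\<And>n i t. n \<ge> 1 \<Longrightarrow> i < N \<Longrightarrow> t \<in> {0..T} \<Longrightarrow>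
                  (xs n i has_vector_derivative vs n i t) (at t within {0..T})"
    and ode_v: "\<And>n i t. n \<ge> 1 \<Longrightarrow> i < N \<Longrightarrow> t \<in> {0..T} \<Longrightarrow>
                  (vs n i has_vector_derivative
                     ((1 / real N) *\<^sub>R (\<Sum>k<N. psin n (norm (xs n i t - xs n k t)) *\<^sub>R (vs n k t - vs n i t))))
                  (at t within {0..T})"
    and subseq: "strict_mono \<phi>" "\<And>k. \<phi> k \<ge> 1"
    and unif: "\<And>i. i < N \<Longrightarrow> uniform_limit {0..T} (\<lambda>k. xs (\<phi> k) i) (x i) sequentially"
    and T0: "T0 = Inf {t \<in> {0<..T}. \<exists>i<N. \<exists>j\<in>Bset N x0 v0 i.
                          lim (\<lambda>k. norm (xs (\<phi> k) i t - xs (\<phi> k) j t)) = 0}"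
    and T0_ne: "{t \<in> {0<..T}. \<exists>i<N. \<exists>j\<in>Bset N x0 v0 i.
                          lim (\<lambda>k. norm (xs (\<phi> k) i t - xs (\<phi> k) j t)) = 0} \<noteq> {}"
    and C1: "\<And>i t. i < N \<Longrightarrow> 0 \<le> t \<Longrightarrow> t < T0 \<Longrightarrow>
               uniform_limit {0..t} (\<lambda>k. vs (\<phi> k) i) (v i) sequentially"
    and vdef: "\<And>i t. i < N \<Longrightarrow> t \<in> {0..<T0} \<Longrightarrow>
               (x i has_vector_derivative v i t) (at t within {0..<T0})"
  shows "\<forall>i<N. \<exists>vbar. \<forall>j\<in>eqclass N \<alpha> x0 v0 x T0 i.
            (v j \<longlongrightarrow> vbar) (at T0 within {0..<T0})"
  proof -
  interpret setting N \<alpha> T T0 psin x0 v0 xs vs \<phi> x v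
    by unfold_locales (fact N alpha cutoff T init ode_x ode_v subseq unif T0 T0_ne C1 vdef)+
  show ?thesis by (rule main)
qed

end
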